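(* Let $n\ge 2$ (integer), $\alpha>0$, $\beta>0$, $R>0$. Then \[ Z_n=\int_{\mathbb{C}^n}\exp\Big(-\beta\Big(\sum_{i<j}-\log|x_i-x_j|-\alpha\sum_{i=1}^n U_\rho(x_i)\Big)\Big)\,\mathrm{d}\ell_{\mathbb{C}}(x_1)\cdots\mathrm{d}\ell_{\mathbb{C}}(x_n)<\infty \quad\text{if and only if}\quad \alpha-n>\frac{2}{\beta}-1 . \] Moreover, the potential $V=-\frac{\alpha}{n}U_\rho$ is given explicitly by \[ V(x)=\frac{\alpha}{2n}\Big(\frac{|x|^2}{R^2}-1+2\log R\Big)\mathbf{1}_{|x|\le R}+\frac{\alpha}{n}\log|x|\,\mathbf{1}_{|x|>R}. \] In particular, when $\beta=2$ the condition reads $\alpha>n$, and when $\alpha=n$ it reads $\beta>2$.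
   Context: $\ell_{\mathbb{C}}$ denotes Lebesgue measure on $\mathbb{C}=\mathbb{R}^2$. $\rho$ is the uniform probability measure on the closed disc $D_R=\{z\in\mathbb{C}:|z|\le R\}$, and $U_\rho(x)=-\int\log|x-y|\,\mathrm{d}\rho(y)$ is its logarithmic potential. The model is the planar Coulomb gas with $n$ particles, inverse temperature $\beta$ and external potential $V=-\frac{\alpha}{n}U_\rho$: its energy is $E_n(x_1,\dots,x_n)=\sum_{i<j}-\log|x_i-x_j|+n\sum_{i=1}^nV(x_i)$, its partition function is $Z_n=\int_{\mathbb{C}^n}e^{-\beta E_n}\,\mathrm{d}\ell_{\mathbb{C}}^{\otimes n}$, and when $Z_n<\infty$ its law is $P_n=Z_n^{-1}e^{-\beta E_n}\,\mathrm{d}\ell_{\mathbb{C}}^{\otimes n}$ on $\mathbb{C}^n$. *)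

theory Defs
  imports "HOL-Analysis.Analysis"
begin

definition unif_disc :: "real \<Rightarrow> complex measure" where
  "unif_disc R = uniform_measure lborel (cball 0 R)"

definition log_pot :: "real \<Rightarrow> complex \<Rightarrow> real" where
  "log_pot R x = - (\<integral>y. ln (cmod (x - y)) \<partial>unif_disc R)"

definition ext_pot :: "nat \<Rightarrow> real \<Rightarrow> real \<Rightarrow> complex \<Rightarrow> real" where
  "ext_pot n \<alpha> R x = - (\<alpha> / real n) * log_pot R x"

definition energy :: "nat \<Rightarrow> real \<Rightarrow> real \<Rightarrow> (nat \<Rightarrow> complex) \<Rightarrow> real" where
  "energy n \<alpha> R x =
     (\<Sum>j<n. \<Sum>i<j. - ln (cmod (x i - x j))) + real n * (\<Sum>i<n. ext_pot n \<alpha> R (x i))"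

definition partition_fn :: "nat \<Rightarrow> real \<Rightarrow> real \<Rightarrow> real \<Rightarrow> ennreal" where
  "partition_fn n \<beta> \<alpha> R =
     (\<integral>\<^sup>+ x. ennreal (exp (- \<beta> * energy n \<alpha> R x)) \<partial>(PiM {..<n} (\<lambda>_. (lborel :: complex measure))))"

end

theory Submission
  imports Defs "HOL-Complex_Analysis.Complex_Analysis"
begin

lemma circle_mean_aux:
  fixes v :: complex
  assumes "cmod v < 1"
  shows "((\<lambda>t. ln (cmod (1 - v * exp (2 * of_real pi * \<i> * of_real t)))) has_integral 0) {0..1}"
proof (cases "v = 0")
  case True then show ?thesis by simp
next
  case False
  define S where "S = ball (0::complex) (1 / cmod v)"
  have r1: "1 < 1 / cmod v" using assms False by (simp add: field_simps)
  have re: "0 < Re (1 - v * w)" if "w \<in> S" for w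
  proof -
    have "cmod (v * w) < 1" using that False by (simp add: S_def norm_mult field_simps)
    then have "Re (v * w) < 1" using complex_Re_le_cmod[of "v * w"] by linarith
    then show ?thesis by simp
  qed
  have hol: "(\<lambda>w. Ln (1 - v * w)) holomorphic_on S"
    by (intro holomorphic_intros) (auto dest!: re simp: nonpos_Reals_def complex_nonpos_Reals_iff)
  have "((\<lambda>w. Ln (1 - v * w) / (w - 0)) has_contour_integral
          (2*pi * \<i> * winding_number (circlepath 0 1) 0 * Ln (1 - v * 0))) (circlepath 0 1)"
    apply (rule Cauchy_integral_formula_convex_simple[OF _ hol])
    using r1 by (auto simp: S_def)
  then have "((\<lambda>w. Ln (1 - v * w) / w) has_contour_integral 0) (circlepath 0 1)" by simp
  then have "((\<lambda>x. Ln (1 - v * circlepath 0 1 x) / circlepath 0 1 x * vector_derivative (circlepath 0 1) (at x)) has_integral 0) {0..1}"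
    by (simp add: has_contour_integral)
  then have "((\<lambda>x. (2 * pi * \<i>) * Ln (1 - v * exp (2 * of_real pi * \<i> * of_real x))) has_integral 0) {0..1}"
    unfolding vector_derivative_circlepath by (simp add: circlepath field_simps)
  then have "((\<lambda>x. Ln (1 - v * exp (2 * of_real pi * \<i> * of_real x))) has_integral 0) {0..1}"
    by (subst (asm) has_integral_mult_right_iff) auto
  from has_integral_Re[OF this] have "((\<lambda>x. Re (Ln (1 - v * exp (2 * of_real pi * \<i> * of_real x)))) has_integral 0) {0..1}"
    by simp
  moreover have "Re (Ln (1 - v * exp (2 * of_real pi * \<i> * of_real x))) = ln (cmod (1 - v * exp (2 * of_real pi * \<i> * of_real x)))" for x
  proof -
    have "cmod (v * exp (2 * of_real pi * \<i> * of_real x)) < 1"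
      using assms by (simp add: norm_mult)
    then have "1 - v * exp (2 * of_real pi * \<i> * of_real x) \<noteq> 0" by auto
    then show ?thesis by simp
  qed
  ultimately show ?thesis by simp
qed

lemma norm_exp_2pi: "cmod (exp (2 * of_real pi * \<i> * of_real t)) = 1"
proof -
  have "exp (2 * of_real pi * \<i> * of_real t) = exp (\<i> * of_real (2 * pi * t))" by (simp add: ac_simps)
  then show ?thesis by (simp only: norm_exp_i_times)
qed

lemma unit_aux:
  fixes e x y :: complex
  assumes "cmod e = 1" "y \<noteq> 0"
  shows "cmod (x - e * y) = cmod y * cmod (1 - cnj (x / y) * e)"
proof -
  have ce: "cnj e * e = 1"
  proof -
    have "complex_of_real ((cmod e)\<^sup>2) = e * cnj e" by (rule complex_norm_square)
    then show ?thesis using assms(1) by (simp add: mult.commute)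
  qed
  have "x - e * y = - (e * y) * (1 - cnj e * (x / y))"
  proof -
    have "- (e * y) * (1 - cnj e * (x / y)) = - (e * y) + (cnj e * e) * x"
      using assms(2) by (simp add: algebra_simps)
    then show ?thesis using ce by simp
  qed
  then have "cmod (x - e * y) = cmod y * cmod (1 - cnj e * (x / y))"
    by (simp add: norm_mult assms(1))
  also have "cmod (1 - cnj e * (x / y)) = cmod (cnj (1 - cnj e * (x / y)))"
    by (rule complex_mod_cnj[symmetric])
  also have "cnj (1 - cnj e * (x / y)) = 1 - cnj (x / y) * e" by (simp add: mult.commute)
  finally show ?thesis .
qed

lemma circle_mean:
  fixes x y :: complex
  assumes "cmod y \<noteq> cmod x"
  shows "((\<lambda>t. ln (cmod (x - exp (2 * of_real pi * \<i> * of_real t) * y))) has_integral ln (max (cmod x) (cmod y))) {0..1}"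
proof -
  let ?e = "\<lambda>t::real. exp (2 * of_real pi * \<i> * of_real t)"
  have ne: "cmod (?e t) = 1" for t by (rule norm_exp_2pi)
  consider "y = 0" | "x = 0" | "x \<noteq> 0" "y \<noteq> 0" "cmod y < cmod x" | "x \<noteq> 0" "y \<noteq> 0" "cmod x < cmod y"
    using assms by fastforce
  then show ?thesis
  proof cases
    case 1
    then show ?thesis using has_integral_const_real[of "ln (cmod x)" 0 1] by simp
  next
    case 2
    then have "ln (cmod (x - ?e t * y)) = ln (cmod y)" for t by (simp add: norm_mult ne)
    then show ?thesis using has_integral_const_real[of "ln (cmod y)" 0 1] 2 by simp
  next
    case 3
    have "cmod (y / x) < 1" using 3 by (simp add: norm_divide)
    from circle_mean_aux[OF this] have A: "((\<lambda>t. ln (cmod (1 - y / x * ?e t))) has_integral 0) {0..1}" .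
    have eq: "ln (cmod (x - ?e t * y)) = ln (cmod x) + ln (cmod (1 - y / x * ?e t))" for t
    proof -
      have "x - ?e t * y = x * (1 - y / x * ?e t)" using 3 by (simp add: field_simps)
      moreover have "1 - y / x * ?e t \<noteq> 0"
      proof
        assume "1 - y / x * ?e t = 0"
        then have "cmod (y / x * ?e t) = 1" by (metis eq_iff_diff_eq_0 norm_one)
        moreover have "cmod (y / x * ?e t) = cmod (y / x)" by (simp only: norm_mult ne mult_1_right)
        ultimately show False using \<open>cmod (y / x) < 1\<close> by linarith
      qed
      ultimately show ?thesis using 3 by (simp add: norm_mult ln_mult)
    qed
    have "((\<lambda>t. ln (cmod x) + ln (cmod (1 - y / x * ?e t))) has_integral (ln (cmod x) + 0)) {0..1}"
      using has_integral_add[OF has_integral_const_real[of "ln (cmod x)" 0 1] A] by simp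
    then show ?thesis using 3 by (simp add: eq max_def)
  next
    case 4
    have "cmod (cnj (x / y)) < 1" using 4 by (simp add: norm_divide)
    from circle_mean_aux[OF this] have A: "((\<lambda>t. ln (cmod (1 - cnj (x / y) * ?e t))) has_integral 0) {0..1}" .
    have eq: "ln (cmod (x - ?e t * y)) = ln (cmod y) + ln (cmod (1 - cnj (x / y) * ?e t))" for t
    proof -
      have *: "cmod (x - ?e t * y) = cmod y * cmod (1 - cnj (x / y) * ?e t)"
        by (rule unit_aux[OF ne 4(2)])
      moreover have "1 - cnj (x / y) * ?e t \<noteq> 0"
      proof
        assume "1 - cnj (x / y) * ?e t = 0"
        then have "cmod (cnj (x / y) * ?e t) = 1" by (metis eq_iff_diff_eq_0 norm_one)
        moreover have "cmod (cnj (x / y) * ?e t) = cmod (cnj (x / y))" by (simp only: norm_mult ne mult_1_right)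
        ultimately show False using \<open>cmod (cnj (x / y)) < 1\<close> by linarith
      qed
      ultimately show ?thesis using 4 by (simp add: ln_mult)
    qed
    have "((\<lambda>t. ln (cmod y) + ln (cmod (1 - cnj (x / y) * ?e t))) has_integral (ln (cmod y) + 0)) {0..1}"
      using has_integral_add[OF has_integral_const_real[of "ln (cmod y)" 0 1] A] by simp
    then show ?thesis using 4 by (simp add: eq max_def)
  qed
qed

lemma meas_Complex[measurable]:
  "(\<lambda>p. Complex (fst p) (snd p)) \<in> borel_measurable (lborel \<Otimes>\<^sub>M lborel :: (real \<times> real) measure)"
proof -
  have "(\<lambda>p::real\<times>real. Complex (fst p) (snd p)) = (\<lambda>p. of_real (fst p) + \<i> * of_real (snd p))"
    by (auto simp: Complex_eq)
  moreover have "(\<lambda>p::real\<times>real. of_real (fst p) + \<i> * of_real (snd p) :: complex) \<in> borel_measurable (lborel \<Otimes>\<^sub>M lborel)"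
    by measurable
  ultimately show ?thesis by simp
qed

lemma lborel_complex:
  "(lborel :: complex measure) = distr (lborel \<Otimes>\<^sub>M lborel :: (real \<times> real) measure) borel (\<lambda>p. Complex (fst p) (snd p))"
proof (rule lborel_eqI)
  fix l u :: complex
  assume le: "\<And>b. b \<in> Basis \<Longrightarrow> l \<bullet> b \<le> u \<bullet> b"
  then have le1: "Re l \<le> Re u" and le2: "Im l \<le> Im u"
    using le[of 1] le[of \<i>] by (auto simp: Basis_complex_def inner_complex_def)
  have "(\<lambda>p. Complex (fst p) (snd p)) -` box l u \<inter> space (lborel \<Otimes>\<^sub>M lborel) = box (Re l) (Re u) \<times> box (Im l) (Im u)"
    by (auto simp: box_def Basis_complex_def inner_complex_def space_pair_measure)
  then have "emeasure (distr (lborel \<Otimes>\<^sub>M lborel :: (real \<times> real) measure) borel (\<lambda>p. Complex (fst p) (snd p))) (box l u)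
      = emeasure (lborel \<Otimes>\<^sub>M lborel) (box (Re l) (Re u) \<times> box (Im l) (Im u))"
    by (subst emeasure_distr) auto
  also have "\<dots> = ennreal (Re u - Re l) * ennreal (Im u - Im l)"
    using le1 le2 by (simp add: lborel.emeasure_pair_measure_Times)
  also have "\<dots> = (\<Prod>b\<in>Basis. (u - l) \<bullet> b)"
    using le1 le2 by (simp add: Basis_complex_def inner_complex_def ennreal_mult)
  finally show "emeasure (distr (lborel \<Otimes>\<^sub>M lborel :: (real \<times> real) measure) borel (\<lambda>p. Complex (fst p) (snd p))) (box l u) = (\<Prod>b\<in>Basis. (u - l) \<bullet> b)" .
qed simp

lemma nn_integral_complex:
  assumes [measurable]: "f \<in> borel_measurable borel"
  shows "(\<integral>\<^sup>+z. f z \<partial>(lborel :: complex measure)) = (\<integral>\<^sup>+p. f (Complex (fst p) (snd p)) \<partial>(lborel \<Otimes>\<^sub>M lborel))"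
  by (subst lborel_complex) (subst nn_integral_distr, auto)

lemma shear1:
  assumes [measurable]: "f \<in> borel_measurable (lborel \<Otimes>\<^sub>M lborel)"
  shows "(\<integral>\<^sup>+p. f (fst p + s * snd p, snd p) \<partial>(lborel \<Otimes>\<^sub>M lborel)) = (\<integral>\<^sup>+p. f p \<partial>(lborel \<Otimes>\<^sub>M lborel :: (real \<times> real) measure))"
proof -
  have "(\<integral>\<^sup>+p. f (fst p + s * snd p, snd p) \<partial>(lborel \<Otimes>\<^sub>M lborel)) = (\<integral>\<^sup>+y. \<integral>\<^sup>+x. f (x + s * y, y) \<partial>lborel \<partial>lborel)"
    by (subst lborel_pair.nn_integral_snd[symmetric]) auto
  also have "\<dots> = (\<integral>\<^sup>+y. \<integral>\<^sup>+x. f (x, y) \<partial>lborel \<partial>lborel)"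
  proof (rule nn_integral_cong)
    fix y :: real
    show "(\<integral>\<^sup>+x. f (x + s * y, y) \<partial>lborel) = (\<integral>\<^sup>+x. f (x, y) \<partial>lborel)"
      using nn_integral_real_affine[of "\<lambda>x. f (x, y)" 1 "s * y"] by (simp add: add.commute)
  qed
  also have "\<dots> = (\<integral>\<^sup>+p. f p \<partial>(lborel \<Otimes>\<^sub>M lborel))"
    by (rule lborel_pair.nn_integral_snd) auto
  finally show ?thesis .
qed

lemma shear2:
  assumes [measurable]: "f \<in> borel_measurable (lborel \<Otimes>\<^sub>M lborel)"
  shows "(\<integral>\<^sup>+p. f (fst p, snd p + s * fst p) \<partial>(lborel \<Otimes>\<^sub>M lborel)) = (\<integral>\<^sup>+p. f p \<partial>(lborel \<Otimes>\<^sub>M lborel :: (real \<times> real) measure))"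
proof -
  have "(\<integral>\<^sup>+p. f (fst p, snd p + s * fst p) \<partial>(lborel \<Otimes>\<^sub>M lborel)) = (\<integral>\<^sup>+x. \<integral>\<^sup>+y. f (x, y + s * x) \<partial>lborel \<partial>lborel)"
    by (subst lborel.nn_integral_fst[symmetric]) auto
  also have "\<dots> = (\<integral>\<^sup>+x. \<integral>\<^sup>+y. f (x, y) \<partial>lborel \<partial>lborel)"
  proof (rule nn_integral_cong)
    fix x :: real
    show "(\<integral>\<^sup>+y. f (x, y + s * x) \<partial>lborel) = (\<integral>\<^sup>+y. f (x, y) \<partial>lborel)"
      using nn_integral_real_affine[of "\<lambda>y. f (x, y)" 1 "s * x"] by (simp add: add.commute)
  qed
  also have "\<dots> = (\<integral>\<^sup>+p. f p \<partial>(lborel \<Otimes>\<^sub>M lborel))"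
    by (rule lborel.nn_integral_fst) auto
  finally show ?thesis .
qed

lemma rot_identity:
  fixes r m a b t :: real
  assumes "r^2 + m^2 = 1" "1 + r \<noteq> 0" "t = m / (1 + r)"
  shows "r * a - m * b = (a - t * b) - t * (b + m * (a - t * b))"
    and "m * a + r * b = b + m * (a - t * b)"
proof -
  have tm: "t * (1 + r) = m" using assms by simp
  have ts: "t * m = 1 - r"
  proof -
    have "t * m * (1 + r) = m * m" using tm by (simp add: algebra_simps)
    also have "\<dots> = (1 - r) * (1 + r)" using assms(1) by (simp add: power2_eq_square algebra_simps)
    finally show ?thesis using assms(2) by simp
  qed
  show "m * a + r * b = b + m * (a - t * b)"
  proof -
    have "b * r + b * (t * m) = b * (r + t * m)" by (simp add: algebra_simps)
    also have "r + t * m = 1" using ts by simp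
    finally have "b * r + b * (t * m) = b" by simp
    then show ?thesis by (simp add: algebra_simps)
  qed
  have "(a - t * b) - t * (b + m * (a - t * b)) = a - 2 * t * b - (t * m) * a + t * (t * m) * b"
    by (simp add: algebra_simps)
  also have "\<dots> = a - 2 * t * b - (1 - r) * a + t * (1 - r) * b" by (simp only: ts)
  also have "\<dots> = r * a - t * (1 + r) * b" by (simp add: algebra_simps)
  also have "\<dots> = r * a - m * b" using tm by simp
  finally show "r * a - m * b = (a - t * b) - t * (b + m * (a - t * b))" by simp
qed

lemma rot_nn_aux:
  fixes c :: complex and f :: "complex \<Rightarrow> ennreal"
  assumes c: "cmod c = 1" "c \<noteq> -1" and f[measurable]: "f \<in> borel_measurable borel"
  shows "(\<integral>\<^sup>+z. f (c * z) \<partial>lborel) = (\<integral>\<^sup>+z. f z \<partial>lborel)"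
proof -
  define r m where "r = Re c" and "m = Im c"
  have rm: "r^2 + m^2 = 1" using c(1) unfolding r_def m_def by (simp add: cmod_power2[symmetric])
  have r1: "1 + r \<noteq> 0"
  proof
    assume "1 + r = 0"
    then have "r = -1" by simp
    then have "m * m = 0" using rm by (simp add: power2_eq_square)
    then have "m = 0" by simp
    then have "c = -1" using \<open>1 + r = 0\<close> unfolding r_def m_def by (simp add: complex_eq_iff)
    with c(2) show False by simp
  qed
  define t where "t = m / (1 + r)"
  define g where "g = (\<lambda>q::real\<times>real. f (Complex (fst q) (snd q)))"
  have g[measurable]: "g \<in> borel_measurable (lborel \<Otimes>\<^sub>M lborel)" unfolding g_def by measurable
  have pt: "f (c * Complex a b) =
     g ((a - t * b) - t * (b + m * (a - t * b)), b + m * (a - t * b))" for a b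
  proof -
    have "c * Complex a b = Complex ((a - t * b) - t * (b + m * (a - t * b))) (b + m * (a - t * b))"
      using rot_identity[OF rm r1 t_def, of a b] unfolding r_def m_def
      by (simp add: complex_eq_iff)
    then show ?thesis unfolding g_def by simp
  qed
  have "(\<integral>\<^sup>+z. f (c * z) \<partial>lborel) = (\<integral>\<^sup>+p. f (c * Complex (fst p) (snd p)) \<partial>(lborel \<Otimes>\<^sub>M lborel))"
    by (rule nn_integral_complex) measurable
  also have "\<dots> = (\<integral>\<^sup>+p. (\<lambda>q. g (fst q - t * (snd q + m * fst q), snd q + m * fst q)) (fst p + (- t) * snd p, snd p) \<partial>(lborel \<Otimes>\<^sub>M lborel))"
    by (simp add: pt algebra_simps)
  also have "\<dots> = (\<integral>\<^sup>+p. g (fst p - t * (snd p + m * fst p), snd p + m * fst p) \<partial>(lborel \<Otimes>\<^sub>M lborel))"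
    by (rule shear1) measurable
  also have "\<dots> = (\<integral>\<^sup>+p. (\<lambda>q. g (fst q + (- t) * snd q, snd q)) (fst p, snd p + m * fst p) \<partial>(lborel \<Otimes>\<^sub>M lborel))"
    by simp
  also have "\<dots> = (\<integral>\<^sup>+p. g (fst p + (- t) * snd p, snd p) \<partial>(lborel \<Otimes>\<^sub>M lborel))"
    by (rule shear2) measurable
  also have "\<dots> = (\<integral>\<^sup>+p. g p \<partial>(lborel \<Otimes>\<^sub>M lborel))"
    by (rule shear1) measurable
  also have "\<dots> = (\<integral>\<^sup>+z. f z \<partial>lborel)"
    unfolding g_def by (rule nn_integral_complex[symmetric]) measurable
  finally show ?thesis .
qed

lemma rot_nn:
  fixes c :: complex and f :: "complex \<Rightarrow> ennreal"
  assumes c: "cmod c = 1" and f[measurable]: "f \<in> borel_measurable borel"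
  shows "(\<integral>\<^sup>+z. f (c * z) \<partial>lborel) = (\<integral>\<^sup>+z. f z \<partial>lborel)"
proof (cases "c = -1")
  case False then show ?thesis using rot_nn_aux[OF c False f] by simp
next
  case True
  have i: "cmod \<i> = 1" "\<i> \<noteq> -1" by (auto simp: complex_eq_iff)
  have "(\<integral>\<^sup>+z. f (\<i> * (\<i> * z)) \<partial>lborel) = (\<integral>\<^sup>+z. f (\<i> * z) \<partial>lborel)"
    by (rule rot_nn_aux[OF i, of "\<lambda>z. f (\<i> * z)"]) measurable
  also have "\<dots> = (\<integral>\<^sup>+z. f z \<partial>lborel)" by (rule rot_nn_aux[OF i f])
  finally show ?thesis using True by simp
qed

lemma unit_ball_vol_2: "unit_ball_vol 2 = pi"
  using unit_ball_vol_numeral(1)[of Num.One] by simp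

lemma emeasure_ball_complex: "r \<ge> 0 \<Longrightarrow> emeasure lborel (ball (c::complex) r) = ennreal (pi * r^2)"
  by (subst emeasure_ball) (auto simp: unit_ball_vol_2)

lemma emeasure_cball_complex: "r \<ge> 0 \<Longrightarrow> emeasure lborel (cball (c::complex) r) = ennreal (pi * r^2)"
  by (subst emeasure_cball) (auto simp: unit_ball_vol_2)

definition radM :: "real measure" where
  "radM = density lborel (\<lambda>u. ennreal (2 * pi * max 0 (- u)))"

lemma distr_negnorm: "distr (lborel :: complex measure) borel (\<lambda>z. - cmod z) = radM"
proof (rule measure_eqI_lessThan)
  show "sets (distr (lborel :: complex measure) borel (\<lambda>z. - cmod z)) = sets borel" by simp
  show "sets radM = sets borel" by (simp add: radM_def)
  have E: "emeasure (distr (lborel :: complex measure) borel (\<lambda>z. - cmod z)) {x<..} = ennreal (pi * (max 0 (-x))^2)" for x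
  proof -
    have "emeasure (distr (lborel :: complex measure) borel (\<lambda>z. - cmod z)) {x<..} = emeasure lborel ((\<lambda>z::complex. - cmod z) -` {x<..})"
      by (subst emeasure_distr) auto
    also have "(\<lambda>z::complex. - cmod z) -` {x<..} = ball 0 (max 0 (-x))"
      by (auto simp: max_def) (smt (verit) norm_ge_zero)
    also have "emeasure lborel (ball (0::complex) (max 0 (-x))) = ennreal (pi * (max 0 (-x))^2)"
      by (rule emeasure_ball_complex) simp
    finally show ?thesis .
  qed
  show "emeasure (distr (lborel :: complex measure) borel (\<lambda>z. - cmod z)) {x<..} < \<infinity>" for x
    unfolding E by simp
  show "emeasure (distr (lborel :: complex measure) borel (\<lambda>z. - cmod z)) {x<..} = emeasure radM {x<..}" for x
  proof (cases "x < 0")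
    case False
    have "emeasure radM {x<..} = (\<integral>\<^sup>+u. ennreal (2 * pi * max 0 (- u)) * indicator {x<..} u \<partial>lborel)"
      by (subst radM_def, subst emeasure_density) auto
    also have "\<dots> = (\<integral>\<^sup>+u. 0 \<partial>(lborel::real measure))"
      using False by (intro nn_integral_cong) (auto simp: indicator_def max_def)
    finally show ?thesis using False unfolding E by (simp add: max_def)
  next
    case True
    have fd: "((\<lambda>u. - pi * u^2) has_vector_derivative (- 2 * pi * u)) (at u within {x..0})" for u
    proof -
      have "((\<lambda>u. - pi * u^2) has_real_derivative (- 2 * pi * u)) (at u within {x..0})"
        by (auto intro!: derivative_eq_intros)
      then show ?thesis by (simp add: has_real_derivative_iff_has_vector_derivative)
    qed
    have "((\<lambda>u. - 2 * pi * u) has_integral ((- pi * 0^2) - (- pi * x^2))) {x..0}"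
      by (rule fundamental_theorem_of_calculus) (use True fd in auto)
    then have hi: "((\<lambda>u. - 2 * pi * u) has_integral (pi * x^2)) {x..0}" by simp
    have "emeasure radM {x<..} = (\<integral>\<^sup>+u. ennreal (2 * pi * max 0 (- u)) * indicator {x<..} u \<partial>lborel)"
      by (subst radM_def, subst emeasure_density) auto
    also have "\<dots> = (\<integral>\<^sup>+u. ennreal (indicator {x..0} u * (- 2 * pi * u)) \<partial>lborel)"
    proof (rule nn_integral_cong_AE)
      show "AE u in lborel. ennreal (2 * pi * max 0 (- u)) * indicator {x<..} u = ennreal (indicator {x..0} u * (- 2 * pi * u))"
        using AE_lborel_singleton[of x]
      proof eventually_elim
        case (elim u)
        then show ?case by (auto simp: indicator_def max_def)
      qed
    qed
    also have "\<dots> = ennreal (pi * x^2)"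
      by (rule nn_integral_has_integral_lebesgue[OF _ hi]) (auto simp: mult_nonpos_nonneg)
    finally show ?thesis unfolding E using True by (simp add: max_def)
  qed
qed

lemma radial_nn:
  fixes \<phi> :: "real \<Rightarrow> ennreal"
  assumes [measurable]: "\<phi> \<in> borel_measurable borel"
  shows "(\<integral>\<^sup>+z. \<phi> (cmod z) \<partial>(lborel :: complex measure)) = (\<integral>\<^sup>+s. ennreal (2 * pi * max 0 s) * \<phi> s \<partial>lborel)"
proof -
  have "(\<integral>\<^sup>+z. \<phi> (cmod z) \<partial>(lborel :: complex measure)) = (\<integral>\<^sup>+z. (\<lambda>u. \<phi> (- u)) (- cmod z) \<partial>(lborel :: complex measure))"
    by simp
  also have "\<dots> = (\<integral>\<^sup>+u. \<phi> (- u) \<partial>distr (lborel :: complex measure) borel (\<lambda>z. - cmod z))"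
    by (subst nn_integral_distr) auto
  also have "\<dots> = (\<integral>\<^sup>+u. ennreal (2 * pi * max 0 (- u)) * \<phi> (- u) \<partial>lborel)"
    unfolding distr_negnorm radM_def by (subst nn_integral_density) auto
  also have "\<dots> = (\<integral>\<^sup>+s. ennreal (2 * pi * max 0 s) * \<phi> s \<partial>lborel)"
    using nn_integral_real_affine[of "\<lambda>s. ennreal (2 * pi * max 0 s) * \<phi> s" "-1" 0] by simp
  finally show ?thesis .
qed

lemma radial_int:
  fixes f :: "real \<Rightarrow> real"
  assumes [measurable]: "f \<in> borel_measurable borel"
  shows "(\<integral>z. f (cmod z) \<partial>(lborel :: complex measure)) = (\<integral>s. (2 * pi * max 0 s) * f s \<partial>lborel)"
proof -
  have "(\<integral>z. f (cmod z) \<partial>(lborel :: complex measure)) = (\<integral>z. (\<lambda>u. f (- u)) (- cmod z) \<partial>(lborel :: complex measure))"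
    by simp
  also have "\<dots> = (\<integral>u. f (- u) \<partial>distr (lborel :: complex measure) borel (\<lambda>z. - cmod z))"
    by (subst integral_distr) auto
  also have "\<dots> = (\<integral>u. (2 * pi * max 0 (- u)) * f (- u) \<partial>lborel)"
    unfolding distr_negnorm radM_def by (subst integral_density) auto
  also have "\<dots> = (\<integral>s. (2 * pi * max 0 s) * f s \<partial>lborel)"
    using lborel_integral_real_affine[of "-1" "\<lambda>s. (2 * pi * max 0 s) * f s" 0] by simp
  finally show ?thesis .
qed

lemma cball_borel[measurable]: "cball (c::'a::euclidean_space) r \<in> sets borel"
  by (simp add: borel_closed)

lemma sets_unif_disc[simp, measurable_cong]: "sets (unif_disc R) = sets borel"
  by (simp add: unif_disc_def)

lemma space_unif_disc[simp]: "space (unif_disc R) = UNIV"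
  by (simp add: unif_disc_def)

lemma emeasure_D: "R > 0 \<Longrightarrow> emeasure lborel (cball (0::complex) R) = ennreal (pi * R^2)"
  by (rule emeasure_cball_complex) simp

lemma unif_disc_space1: "R > 0 \<Longrightarrow> emeasure (unif_disc R) UNIV = 1"
  using emeasure_uniform_measure_1[of lborel "cball (0::complex) R"] emeasure_D[of R]
  by (simp add: unif_disc_def)

lemma finite_unif_disc: "R > 0 \<Longrightarrow> finite_measure (unif_disc R)"
  by (rule finite_measureI) (simp add: unif_disc_space1)

lemma unif_disc_density:
  assumes "R > 0"
  shows "unif_disc R = density lborel (\<lambda>z. ennreal (indicator (cball 0 R) z / (pi * R^2)))"
  unfolding unif_disc_def uniform_measure_def emeasure_D[OF assms]
proof (rule density_cong)
  show "(\<lambda>x. indicator (cball 0 R) x / ennreal (pi * R\<^sup>2)) \<in> borel_measurable lborel" by simp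
  show "(\<lambda>z. ennreal (indicator (cball 0 R) z / (pi * R^2))) \<in> borel_measurable lborel" by simp
  show "AE x in lborel. indicator (cball 0 R) x / ennreal (pi * R\<^sup>2) = ennreal (indicator (cball 0 R) x / (pi * R\<^sup>2))"
  proof (rule AE_I2)
    fix x
    have "1 / ennreal (pi * R^2) = ennreal (1 / (pi * R^2))"
      using divide_ennreal[of 1 "pi * R^2"] assms by simp
    then show "indicator (cball 0 R) x / ennreal (pi * R\<^sup>2) = ennreal (indicator (cball 0 R) x / (pi * R\<^sup>2))"
      by (auto simp: indicator_def)
  qed
qed

lemma integral_unif_disc:
  fixes f :: "complex \<Rightarrow> real"
  assumes R: "R > 0" and [measurable]: "f \<in> borel_measurable borel"
  shows "(\<integral>z. f z \<partial>unif_disc R) = (\<integral>z. indicator (cball 0 R) z * f z \<partial>lborel) / (pi * R^2)"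
proof -
  have "(\<integral>z. f z \<partial>unif_disc R) = (\<integral>z. (indicator (cball 0 R) z / (pi * R^2)) *\<^sub>R f z \<partial>lborel)"
    unfolding unif_disc_density[OF R] by (subst integral_density) auto
  also have "\<dots> = (\<integral>z. (1 / (pi * R^2)) * (indicator (cball 0 R) z * f z) \<partial>lborel)"
    by (simp add: field_simps)
  also have "\<dots> = (\<integral>z. indicator (cball 0 R) z * f z \<partial>lborel) / (pi * R^2)"
    by simp
  finally show ?thesis .
qed

lemma nn_integral_unif_disc:
  fixes f :: "complex \<Rightarrow> ennreal"
  assumes R: "R > 0" and [measurable]: "f \<in> borel_measurable borel"
  shows "(\<integral>\<^sup>+z. f z \<partial>unif_disc R) = (\<integral>\<^sup>+z. f z * indicator (cball 0 R) z \<partial>lborel) / ennreal (pi * R^2)"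
  unfolding unif_disc_def by (subst nn_integral_uniform_measure) (auto simp: emeasure_D[OF R])

lemma unif_disc_rot:
  assumes R: "R > 0" and c: "cmod c = 1"
  shows "distr (unif_disc R) (unif_disc R) (\<lambda>z. c * z) = unif_disc R"
proof (rule measure_eqI)
  show "sets (distr (unif_disc R) (unif_disc R) (\<lambda>z. c * z)) = sets (unif_disc R)" by simp
  fix A assume A: "A \<in> sets (distr (unif_disc R) (unif_disc R) (\<lambda>z. c * z))"
  then have [measurable]: "A \<in> sets borel" by simp
  have m: "(\<lambda>z. c * z) \<in> measurable (unif_disc R) (unif_disc R)"
    by (simp add: measurable_cong_sets[OF sets_unif_disc sets_unif_disc])
  have eq: "(\<lambda>z. c * z) -` A \<inter> cball 0 R = (\<lambda>z. c * z) -` (A \<inter> cball 0 R)"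
    using c by (auto simp: norm_mult)
  have "emeasure lborel ((\<lambda>z. c * z) -` A \<inter> cball 0 R) = (\<integral>\<^sup>+z. indicator (A \<inter> cball 0 R) (c * z) \<partial>lborel)"
  proof -
    have S: "(\<lambda>z. c * z) -` (A \<inter> cball 0 R) \<in> sets lborel"
      using measurable_sets[of "\<lambda>z. c * z" lborel borel "A \<inter> cball 0 R"] by simp
    have "indicator ((\<lambda>z. c * z) -` (A \<inter> cball 0 R)) = (\<lambda>z. indicator (A \<inter> cball 0 R) (c * z) :: ennreal)"
      by (auto simp: indicator_def)
    then show ?thesis unfolding eq using nn_integral_indicator[OF S] by simp
  qed
  also have "\<dots> = (\<integral>\<^sup>+z. indicator (A \<inter> cball 0 R) z \<partial>lborel)"
    by (rule rot_nn[OF c]) simp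
  also have "\<dots> = emeasure lborel (A \<inter> cball 0 R)" by simp
  finally have *: "emeasure lborel ((\<lambda>z. c * z) -` A \<inter> cball 0 R) = emeasure lborel (A \<inter> cball 0 R)" .
  show "emeasure (distr (unif_disc R) (unif_disc R) (\<lambda>z. c * z)) A = emeasure (unif_disc R) A"
  proof -
    have A': "A \<in> sets (unif_disc R)" by simp
    have "emeasure (distr (unif_disc R) (unif_disc R) (\<lambda>z. c * z)) A = emeasure (unif_disc R) ((\<lambda>z. c * z) -` A \<inter> space (unif_disc R))"
      by (rule emeasure_distr[OF m A'])
    also have "\<dots> = emeasure (unif_disc R) A"
    proof -
      have pre: "(\<lambda>z. c * z) -` A \<in> sets lborel"
        using measurable_sets[of "\<lambda>z. c * z" lborel borel A] by simp
      show ?thesis using * pre unfolding unif_disc_def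
        by (simp add: emeasure_uniform_measure Int_commute)
    qed
    finally show ?thesis .
  qed
qed

lemma ln_abs_bound: "(t::real) \<ge> 0 \<Longrightarrow> \<bar>ln t\<bar> \<le> t + 1 / t"
proof (cases "t = 0")
  case False
  assume t: "t \<ge> 0"
  with False have tp: "t > 0" by simp
  have a: "ln t \<le> t" using ln_le_minus_one[OF tp] by simp
  have "ln (1 / t) \<le> 1 / t" using ln_le_minus_one[of "1/t"] tp by simp
  then have b: "- ln t \<le> 1 / t" using tp by (simp add: ln_div)
  have c: "0 < 1 / t" using tp by simp
  show ?thesis unfolding abs_le_iff using a b c tp by linarith
qed simp

lemma ennreal_div_lt_top: "(X::ennreal) < top \<Longrightarrow> (c::real) > 0 \<Longrightarrow> X / ennreal c < top"
  by (metis ennreal_less_zero_iff ennreal_zero_less_top ennreal_divide_eq_top_iff ennreal_zero_less_divide)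

lemma translate_nn:
  fixes f :: "complex \<Rightarrow> ennreal"
  assumes [measurable]: "f \<in> borel_measurable borel"
  shows "(\<integral>\<^sup>+y. f (y - x) \<partial>lborel) = (\<integral>\<^sup>+z. f z \<partial>lborel)"
proof -
  have "(\<integral>\<^sup>+z. f z \<partial>lborel) = (\<integral>\<^sup>+z. f z \<partial>density (distr lborel borel (\<lambda>z. - x + (1::real) *\<^sub>R z)) (\<lambda>_. \<bar>1::real\<bar> ^ DIM(complex)))"
    using lborel_affine[of 1 "- x"] by simp
  also have "\<dots> = (\<integral>\<^sup>+y. f (y - x) \<partial>lborel)"
    by (subst nn_integral_density) (auto simp: nn_integral_distr)
  finally show ?thesis by simp
qed

lemma ln_integrable:
  assumes R: "R > 0"
  shows "integrable (unif_disc R) (\<lambda>y. ln (cmod (x - y)))"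
proof (subst integrable_iff_bounded, intro conjI)
  show "(\<lambda>y. ln (cmod (x - y))) \<in> borel_measurable (unif_disc R)" by simp
  define R' where "R' = cmod x + R"
  have R'p: "R' > 0" using R by (simp add: R'_def add_nonneg_pos)
  define g where "g = (\<lambda>z::complex. ennreal (R' + 1 / cmod z) * indicator (cball 0 R') z)"
  have g[measurable]: "g \<in> borel_measurable borel" unfolding g_def by measurable
  have "(\<integral>\<^sup>+y. ennreal (norm (ln (cmod (x - y)))) * indicator (cball 0 R) y \<partial>lborel) \<le> (\<integral>\<^sup>+y. g (y - x) \<partial>lborel)"
  proof (rule nn_integral_mono)
    fix y :: complex
    show "ennreal (norm (ln (cmod (x - y)))) * indicator (cball 0 R) y \<le> g (y - x)"
    proof (cases "y \<in> cball 0 R")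
      case True
      have d: "cmod (y - x) \<le> R'" using True norm_triangle_ineq4[of y x] by (simp add: R'_def)
      have "\<bar>ln (cmod (x - y))\<bar> \<le> cmod (x - y) + 1 / cmod (x - y)" by (rule ln_abs_bound) simp
      also have "\<dots> \<le> R' + 1 / cmod (y - x)" using d by (simp add: norm_minus_commute)
      finally show ?thesis using True d by (simp add: g_def indicator_def ennreal_leI)
    qed simp
  qed
  also have "\<dots> = (\<integral>\<^sup>+z. g z \<partial>lborel)" by (rule translate_nn) simp
  also have "\<dots> = (\<integral>\<^sup>+z. (\<lambda>s. ennreal (R' + 1 / s) * indicator {..R'} s) (cmod z) \<partial>lborel)"
    by (simp add: g_def indicator_def)
  also have "\<dots> = (\<integral>\<^sup>+s. ennreal (2 * pi * max 0 s) * (ennreal (R' + 1 / s) * indicator {..R'} s) \<partial>lborel)"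
    by (rule radial_nn) simp
  also have "\<dots> \<le> (\<integral>\<^sup>+s. ennreal (2 * pi * (R' * R' + 1)) * indicator {0..R'} s \<partial>lborel)"
  proof (rule nn_integral_mono)
    fix s :: real
    show "ennreal (2 * pi * max 0 s) * (ennreal (R' + 1 / s) * indicator {..R'} s) \<le> ennreal (2 * pi * (R' * R' + 1)) * indicator {0..R'} s"
    proof (cases "0 < s \<and> s \<le> R'")
      case True
      have e1: "ennreal (2 * pi * max 0 s) * (ennreal (R' + 1 / s) * indicator {..R'} s) = ennreal (2 * pi * s) * ennreal (R' + 1 / s)"
        using True by (simp add: max_def indicator_def del: ennreal_plus)
      have e2: "ennreal (2 * pi * s) * ennreal (R' + 1 / s) = ennreal (2 * pi * s * (R' + 1 / s))"
        using True R'p by (simp add: ennreal_mult del: ennreal_plus)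
      have "ennreal (2 * pi * max 0 s) * (ennreal (R' + 1 / s) * indicator {..R'} s) = ennreal (2 * pi * s * (R' + 1 / s))"
        using e1 e2 by simp
      also have "2 * pi * s * (R' + 1 / s) = 2 * pi * (s * R' + 1)" using True by (simp add: field_simps)
      also have "ennreal (2 * pi * (s * R' + 1)) \<le> ennreal (2 * pi * (R' * R' + 1))"
        using True R'p by (intro ennreal_leI) (simp add: mult_right_mono)
      finally show ?thesis using True by simp
    next
      case False
      then show ?thesis by (auto simp: indicator_def max_def)
    qed
  qed
  also have "\<dots> = ennreal (2 * pi * (R' * R' + 1)) * ennreal R'"
    using R'p by (subst nn_integral_cmult_indicator) auto
  also have "\<dots> < \<infinity>" by (simp add: ennreal_mult_less_top)
  finally have fin: "(\<integral>\<^sup>+y. ennreal (norm (ln (cmod (x - y)))) * indicator (cball 0 R) y \<partial>lborel) < \<infinity>" .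
  show "(\<integral>\<^sup>+y. ennreal (norm (ln (cmod (x - y)))) \<partial>unif_disc R) < \<infinity>"
    using fin R by (subst nn_integral_unif_disc) (auto intro!: ennreal_div_lt_top)
qed

definition unitP :: "real measure" where "unitP = uniform_measure lborel {0..1}"

lemma sets_unitP[simp, measurable_cong]: "sets unitP = sets borel"
  by (simp add: unitP_def)

lemma space_unitP[simp]: "space unitP = UNIV"
  by (simp add: unitP_def)

lemma unitP_density: "unitP = density lborel (\<lambda>t. ennreal (indicator {0..1} t))"
  unfolding unitP_def uniform_measure_def
  by (rule density_cong) (auto simp: indicator_def divide_ennreal_def)

lemma emeasure_unitP: "emeasure unitP UNIV = 1"
  unfolding unitP_def by (simp add: emeasure_uniform_measure)

lemma finite_unitP: "finite_measure unitP"
  by (rule finite_measureI) (simp add: emeasure_unitP)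

lemma integral_unitP:
  fixes f :: "real \<Rightarrow> real"
  assumes [measurable]: "f \<in> borel_measurable borel"
  shows "(\<integral>t. f t \<partial>unitP) = (LINT t:{0..1}|lborel. f t)"
  unfolding unitP_density set_lebesgue_integral_def
  by (subst integral_density) auto

lemma sphere_null: "sphere (c::complex) r \<in> null_sets lborel"
  using negligible_sphere[of c r]
  by (auto simp: null_sets_completion_iff negligible_iff_null_sets negligible_convex_frontier)

lemma AE_norm_neq: "AE y in unif_disc R. cmod y \<noteq> a"
  unfolding unif_disc_def
proof (rule AE_uniform_measureI)
  show "cball 0 R \<in> sets lborel" by simp
  have "AE y in lborel. y \<notin> sphere (0::complex) a" by (rule AE_not_in[OF sphere_null])
  then show "AE y in lborel. y \<in> cball 0 R \<longrightarrow> cmod y \<noteq> a" by eventually_elim auto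
qed

lemma avg_formula:
  assumes R: "R > 0"
  shows "(\<integral>y. ln (cmod (x - y)) \<partial>unif_disc R) = (\<integral>y. ln (max (cmod x) (cmod y)) \<partial>unif_disc R)"
proof -
  let ?e = "\<lambda>t::real. exp (2 * of_real pi * \<i> * of_real t)"
  define F where "F = (\<lambda>y t. ln (cmod (x - ?e t * y)))"
  interpret rho: finite_measure "unif_disc R" by (rule finite_unif_disc[OF R])
  interpret P: finite_measure unitP by (rule finite_unitP)
  interpret pair_sigma_finite "unif_disc R" unitP ..
  have Fm[measurable]: "case_prod F \<in> borel_measurable (unif_disc R \<Otimes>\<^sub>M unitP)"
    unfolding F_def by measurable
  have rotI: "(\<integral>y. F y t \<partial>unif_disc R) = (\<integral>y. ln (cmod (x - y)) \<partial>unif_disc R)" for t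
  proof -
    have "(\<integral>y. ln (cmod (x - y)) \<partial>unif_disc R) = (\<integral>y. ln (cmod (x - y)) \<partial>distr (unif_disc R) (unif_disc R) (\<lambda>y. ?e t * y))"
      by (simp add: unif_disc_rot[OF R norm_exp_2pi])
    also have "\<dots> = (\<integral>y. F y t \<partial>unif_disc R)"
      unfolding F_def by (subst integral_distr) (auto simp: measurable_cong_sets[OF sets_unif_disc sets_unif_disc])
    finally show ?thesis by simp
  qed
  have rotN: "(\<integral>\<^sup>+y. ennreal (norm (F y t)) \<partial>unif_disc R) = (\<integral>\<^sup>+y. ennreal (norm (ln (cmod (x - y)))) \<partial>unif_disc R)" for t
  proof -
    have "(\<integral>\<^sup>+y. ennreal (norm (ln (cmod (x - y)))) \<partial>unif_disc R) = (\<integral>\<^sup>+y. ennreal (norm (ln (cmod (x - y)))) \<partial>distr (unif_disc R) (unif_disc R) (\<lambda>y. ?e t * y))"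
      by (simp add: unif_disc_rot[OF R norm_exp_2pi])
    also have "\<dots> = (\<integral>\<^sup>+y. ennreal (norm (F y t)) \<partial>unif_disc R)"
      unfolding F_def by (subst nn_integral_distr) (auto simp: measurable_cong_sets[OF sets_unif_disc sets_unif_disc])
    finally show ?thesis by simp
  qed
  define K where "K = (\<integral>\<^sup>+y. ennreal (norm (ln (cmod (x - y)))) \<partial>unif_disc R)"
  have K: "K < \<infinity>" using ln_integrable[OF R, of x] unfolding K_def integrable_iff_bounded by simp
  have int: "integrable (unif_disc R \<Otimes>\<^sub>M unitP) (case_prod F)"
  proof (subst integrable_iff_bounded, intro conjI)
    show "case_prod F \<in> borel_measurable (unif_disc R \<Otimes>\<^sub>M unitP)" by simp
    have "(\<integral>\<^sup>+z. ennreal (norm (case_prod F z)) \<partial>(unif_disc R \<Otimes>\<^sub>M unitP)) = (\<integral>\<^sup>+t. \<integral>\<^sup>+y. ennreal (norm (F y t)) \<partial>unif_disc R \<partial>unitP)"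
      by (subst nn_integral_snd[symmetric]) auto
    also have "\<dots> = (\<integral>\<^sup>+t. K \<partial>unitP)" by (rule nn_integral_cong) (simp only: rotN K_def)
    also have "\<dots> = K" by (simp add: emeasure_unitP)
    finally show "(\<integral>\<^sup>+z. ennreal (norm (case_prod F z)) \<partial>(unif_disc R \<Otimes>\<^sub>M unitP)) < \<infinity>" using K by simp
  qed
  have "(\<integral>t. (\<integral>y. F y t \<partial>unif_disc R) \<partial>unitP) = (\<integral>y. (\<integral>t. F y t \<partial>unitP) \<partial>unif_disc R)"
    by (rule Fubini_integral[OF int])
  moreover have "(\<integral>t. (\<integral>y. F y t \<partial>unif_disc R) \<partial>unitP) = (\<integral>y. ln (cmod (x - y)) \<partial>unif_disc R)"
    by (simp add: rotI measure_def emeasure_unitP)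
  moreover have "(\<integral>y. (\<integral>t. F y t \<partial>unitP) \<partial>unif_disc R) = (\<integral>y. ln (max (cmod x) (cmod y)) \<partial>unif_disc R)"
  proof (rule integral_cong_AE)
    show "(\<lambda>y. \<integral>t. F y t \<partial>unitP) \<in> borel_measurable (unif_disc R)" by measurable
    show "(\<lambda>y. ln (max (cmod x) (cmod y))) \<in> borel_measurable (unif_disc R)" by measurable
    show "AE y in unif_disc R. (\<integral>t. F y t \<partial>unitP) = ln (max (cmod x) (cmod y))"
      using AE_norm_neq[where R=R and a="cmod x"]
    proof eventually_elim
      case (elim y)
      have cont: "continuous_on {0..1} (F y)"
        unfolding F_def
      proof (rule continuous_on_ln)
        show "continuous_on {0..1} (\<lambda>t. cmod (x - ?e t * y))" by (intro continuous_intros)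
        show "\<forall>t\<in>{0..1}. cmod (x - ?e t * y) \<noteq> 0"
        proof
          fix t :: real
          have "cmod (?e t * y) = cmod y" by (simp add: norm_mult norm_exp_2pi)
          then show "cmod (x - ?e t * y) \<noteq> 0" using elim by auto
        qed
      qed
      have si: "set_integrable lborel {0..1} (F y)"
        unfolding set_integrable_def by (rule borel_integrable_compact[OF compact_Icc cont])
      have "(\<integral>t. F y t \<partial>unitP) = (LINT t:{0..1}|lborel. F y t)"
        by (rule integral_unitP) (simp add: F_def)
      also have "\<dots> = integral {0..1} (F y)" by (rule set_borel_integral_eq_integral(2)[OF si])
      also have "\<dots> = ln (max (cmod x) (cmod y))"
        unfolding F_def by (rule integral_unique[OF circle_mean]) (use elim in auto)
      finally show ?case .
    qed
  qed
  ultimately show ?thesis by simp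
qed

lemma s_ln_s_bound: "(s::real) \<ge> 0 \<Longrightarrow> \<bar>s * ln s\<bar> \<le> 1 + s^2"
proof (cases "s = 0")
  case False
  assume s: "s \<ge> 0"
  then have sp: "s > 0" using False by simp
  have "\<bar>s * ln s\<bar> = s * \<bar>ln s\<bar>" using sp by (simp add: abs_mult)
  also have "\<dots> \<le> s * (s + 1 / s)" using ln_abs_bound[OF s] sp by (intro mult_left_mono) auto
  also have "\<dots> = 1 + s^2" using sp by (simp add: field_simps power2_eq_square)
  finally show ?thesis .
qed simp

lemma cont_s2lns: "continuous_on {0..R} (\<lambda>s::real. s^2 * ln s)"
proof (subst continuous_on_eq_continuous_within, intro ballI)
  fix s assume s: "s \<in> {0..R}"
  show "continuous (at s within {0..R}) (\<lambda>s::real. s^2 * ln s)"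
  proof (cases "s = 0")
    case False
    then have "s > 0" using s by simp
    then have "isCont (\<lambda>s::real. s^2 * ln s) s" by (auto intro!: continuous_intros)
    then show ?thesis by (rule continuous_at_imp_continuous_at_within)
  next
    case True
    have "((\<lambda>s::real. s^2 * ln s) \<longlongrightarrow> 0) (at 0 within {0..R})"
    proof (rule Lim_null_comparison)
      show "\<forall>\<^sub>F x in at 0 within {0..R}. norm (x^2 * ln x) \<le> x * (1 + x^2)"
        unfolding eventually_at_filter
      proof (rule always_eventually, intro allI impI)
        fix x :: real assume "x \<in> {0..R}"
        then have x: "x \<ge> 0" by simp
        have "norm (x^2 * ln x) = x * \<bar>x * ln x\<bar>" using x by (simp add: power2_eq_square abs_mult)
        also have "\<dots> \<le> x * (1 + x^2)" using s_ln_s_bound[OF x] x by (intro mult_left_mono) auto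
        finally show "norm (x^2 * ln x) \<le> x * (1 + x^2)" .
      qed
      have "((\<lambda>x::real. x * (1 + x^2)) \<longlongrightarrow> 0 * (1 + 0^2)) (at 0 within {0..R})"
        by (intro tendsto_intros)
      then show "((\<lambda>x::real. x * (1 + x^2)) \<longlongrightarrow> 0) (at 0 within {0..R})" by simp
    qed
    then show ?thesis using True by (simp add: continuous_within)
  qed
qed

lemma radial_log_HK:
  fixes a R :: real
  assumes R: "R > 0" and a: "a \<ge> 0"
  shows "((\<lambda>s. 2 * pi * s * ln (max a s)) has_integral
          (if a \<le> R then pi * (R^2 * ln R - R^2 / 2 + a^2 / 2) else pi * R^2 * ln a)) {0..R}"
proof -
  have const: "((\<lambda>s. 2 * pi * s * ln a) has_integral (pi * b^2 * ln a)) {0..b}" if "b \<ge> 0" for b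
  proof -
    have "((\<lambda>s. 2 * pi * s * ln a) has_integral ((pi * ln a * b^2) - (pi * ln a * 0^2))) {0..b}"
    proof (rule fundamental_theorem_of_calculus)
      show "0 \<le> b" by fact
      fix s :: real
      have "((\<lambda>s. pi * ln a * s^2) has_real_derivative (2 * pi * s * ln a)) (at s within {0..b})"
        by (auto intro!: derivative_eq_intros)
      then show "((\<lambda>s. pi * ln a * s^2) has_vector_derivative (2 * pi * s * ln a)) (at s within {0..b})"
        by (simp add: has_real_derivative_iff_has_vector_derivative)
    qed
    then show ?thesis by (simp add: algebra_simps)
  qed
  show ?thesis
  proof (cases "a < R")
    case False
    have c: "((\<lambda>s. 2 * pi * s * ln a) has_integral (pi * R^2 * ln a)) {0..R}"
      using const[of R] R by simp
    have "((\<lambda>s. 2 * pi * s * ln (max a s)) has_integral (pi * R^2 * ln a)) {0..R}"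
    proof -
      have mx: "\<And>x. x \<in> {0..R} \<Longrightarrow> max a x = a" using False by (auto simp: max_def)
      show ?thesis using c by (rule has_integral_eq[rotated]) (simp add: mx)
    qed
    moreover have "a = R \<Longrightarrow> pi * (R^2 * ln R - R^2 / 2 + a^2 / 2) = pi * R^2 * ln a" by simp
    ultimately show ?thesis using False by (auto simp: algebra_simps)
  next
    case True
    have i1: "((\<lambda>s. 2 * pi * s * ln (max a s)) has_integral (pi * a^2 * ln a)) {0..a}"
      using const[OF a] by (rule has_integral_eq[rotated]) (auto simp: max_def)
    define F where "F = (\<lambda>s::real. pi * (s^2 * ln s - s^2 / 2))"
    have "((\<lambda>s. 2 * pi * s * ln s) has_integral (F R - F a)) {a..R}"
    proof (rule fundamental_theorem_of_calculus_interior)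
      show "a \<le> R" using True by simp
      have "continuous_on {a..R} (\<lambda>s::real. s^2 * ln s)"
        by (rule continuous_on_subset[OF cont_s2lns[of R]]) (use a in auto)
      then have "continuous_on {a..R} (\<lambda>s::real. s^2 * ln s - s^2 / 2)"
        by (rule continuous_on_diff) (auto intro!: continuous_intros)
      then show "continuous_on {a..R} F" unfolding F_def by (rule continuous_on_mult_left)
      fix s assume s: "s \<in> {a<..<R}"
      then have sp: "s > 0" using a by simp
      have "(F has_real_derivative (pi * (2 * s * ln s + s^2 * (1 / s) - 2 * s / 2))) (at s)"
        unfolding F_def using sp by (auto intro!: derivative_eq_intros)
      moreover have "pi * (2 * s * ln s + s^2 * (1 / s) - 2 * s / 2) = 2 * pi * s * ln s"
        using sp by (simp add: field_simps power2_eq_square)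
      ultimately have "(F has_real_derivative (2 * pi * s * ln s)) (at s)" by (simp add: mult_ac)
      then show "(F has_vector_derivative (2 * pi * s * ln s)) (at s)"
        by (simp add: has_real_derivative_iff_has_vector_derivative)
    qed
    then have i2: "((\<lambda>s. 2 * pi * s * ln (max a s)) has_integral (F R - F a)) {a..R}"
      by (rule has_integral_eq[rotated]) (auto simp: max_def)
    have "((\<lambda>s. 2 * pi * s * ln (max a s)) has_integral (pi * a^2 * ln a + (F R - F a))) {0..R}"
      by (rule has_integral_combine[OF _ _ i1 i2]) (use a True in auto)
    moreover have "pi * a^2 * ln a + (F R - F a) = pi * (R^2 * ln R - R^2 / 2 + a^2 / 2)"
      unfolding F_def by (simp add: algebra_simps)
    ultimately show ?thesis using True by simp
  qed
qed

lemma radial_log: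
  fixes a R :: real
  assumes R: "R > 0" and a: "a \<ge> 0"
  shows "(\<integral>y. ln (max a (cmod y)) \<partial>unif_disc R) = (if a \<le> R then ln R - 1/2 + a^2 / (2 * R^2) else ln a)"
proof -
  define g where "g = (\<lambda>s::real. 2 * pi * s * ln (max a s))"
  have gm[measurable]: "g \<in> borel_measurable borel" unfolding g_def by measurable
  have si: "set_integrable lborel {0..R} g"
    unfolding set_integrable_def
  proof (rule integrableI_bounded_set[where A="{0..R}" and B="2 * pi * (R * \<bar>ln a\<bar> + 1 + R^2)"])
    show "{0..R} \<in> sets lborel" by simp
    show "(\<lambda>x. indicat_real {0..R} x *\<^sub>R g x) \<in> borel_measurable lborel" by measurable
    show "emeasure lborel {0..R} < \<infinity>" using R by simp
    show "AE x in lborel. x \<notin> {0..R} \<longrightarrow> indicat_real {0..R} x *\<^sub>R g x = 0" by simp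
    show "AE x in lborel. x \<in> {0..R} \<longrightarrow> norm (indicat_real {0..R} x *\<^sub>R g x) \<le> 2 * pi * (R * \<bar>ln a\<bar> + 1 + R^2)"
    proof (rule AE_I2, intro impI)
      fix s assume s: "s \<in> {0..R}"
      have "\<bar>s * ln (max a s)\<bar> \<le> R * \<bar>ln a\<bar> + 1 + R^2"
      proof (cases "s \<le> a")
        case True
        then have "\<bar>s * ln (max a s)\<bar> = s * \<bar>ln a\<bar>" using s by (simp add: max_def abs_mult)
        also have "\<dots> \<le> R * \<bar>ln a\<bar>" using s by (intro mult_right_mono) auto
        finally have "\<bar>s * ln (max a s)\<bar> \<le> R * \<bar>ln a\<bar>" .
        moreover have "0 \<le> 1 + R^2" by simp
        ultimately show ?thesis by linarith
      next
        case False
        then have "\<bar>s * ln (max a s)\<bar> = \<bar>s * ln s\<bar>" by (simp add: max_def)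
        also have "\<dots> \<le> 1 + s^2" using s by (intro s_ln_s_bound) simp
        also have "\<dots> \<le> 1 + R^2" using s by (intro add_left_mono power_mono) auto
        finally have "\<bar>s * ln (max a s)\<bar> \<le> 1 + R^2" .
        moreover have "0 \<le> R * \<bar>ln a\<bar>" using R by simp
        ultimately show ?thesis by linarith
      qed
      then show "norm (indicat_real {0..R} s *\<^sub>R g s) \<le> 2 * pi * (R * \<bar>ln a\<bar> + 1 + R^2)"
        using s unfolding g_def by (simp add: abs_mult)
    qed
  qed
  have "(\<integral>y. ln (max a (cmod y)) \<partial>unif_disc R) = (\<integral>z. indicator (cball 0 R) z * ln (max a (cmod z)) \<partial>lborel) / (pi * R^2)"
    by (rule integral_unif_disc[OF R]) measurable
  also have "(\<integral>z. indicator (cball 0 R) z * ln (max a (cmod z)) \<partial>lborel) = (\<integral>z. (\<lambda>s. indicator {..R} s * ln (max a s)) (cmod z) \<partial>lborel)"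
    by (simp add: indicator_def)
  also have "\<dots> = (\<integral>s. (2 * pi * max 0 s) * (indicator {..R} s * ln (max a s)) \<partial>lborel)"
    by (rule radial_int) measurable
  also have "\<dots> = (LINT s:{0..R}|lborel. g s)"
    unfolding set_lebesgue_integral_def g_def by (rule Bochner_Integration.integral_cong) (auto simp: indicator_def max_def)
  also have "\<dots> = integral {0..R} g" by (rule set_borel_integral_eq_integral(2)[OF si])
  also have "\<dots> = (if a \<le> R then pi * (R^2 * ln R - R^2 / 2 + a^2 / 2) else pi * R^2 * ln a)"
    unfolding g_def by (rule integral_unique[OF radial_log_HK[OF R a]])
  finally have I: "(\<integral>y. ln (max a (cmod y)) \<partial>unif_disc R) = (if a \<le> R then pi * (R^2 * ln R - R^2 / 2 + a^2 / 2) else pi * R^2 * ln a) / (pi * R^2)" .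
  have c1: "pi * (R^2 * ln R - R^2 / 2 + a^2 / 2) / (pi * R^2) = ln R - 1/2 + a^2 / (2 * R^2)"
    using R by (simp add: field_simps power2_eq_square)
  have c2: "pi * R^2 * ln a / (pi * R^2) = ln a" using R by simp
  show ?thesis using I c1 c2 by simp
qed

lemma log_pot_formula:
  assumes R: "R > 0"
  shows "log_pot R x = - (if cmod x \<le> R then ln R - 1/2 + (cmod x)^2 / (2 * R^2) else ln (cmod x))"
  unfolding log_pot_def avg_formula[OF R] radial_log[OF R norm_ge_zero] ..

lemma ext_pot_formula:
  assumes R: "R > 0"
  shows "ext_pot n \<alpha> R x =
          (\<alpha> / (2 * real n)) * ((cmod x)\<^sup>2 / R\<^sup>2 - 1 + 2 * ln R) * indicator {x. cmod x \<le> R} x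
        + (\<alpha> / real n) * ln (cmod x) * indicator {x. cmod x > R} x"
proof -
  have e: "(\<alpha> / (2 * real n)) * ((cmod x)\<^sup>2 / R\<^sup>2 - 1 + 2 * ln R) = (\<alpha> / real n) * (ln R - 1/2 + (cmod x)^2 / (2 * R^2))"
  proof (cases "n = 0")
    case False then show ?thesis using R by (simp add: field_simps)
  qed simp
  show ?thesis
    unfolding ext_pot_def log_pot_formula[OF R] using e by (auto simp: indicator_def)
qed

lemma double_sum_sym:
  fixes L :: "nat \<Rightarrow> real"
  shows "(\<Sum>j<n. \<Sum>i<j. L i + L j) = (real n - 1) * (\<Sum>i<n. L i)"
proof (induction n)
  case 0 then show ?case by simp
next
  case (Suc n)
  have "(\<Sum>j<Suc n. \<Sum>i<j. L i + L j) = (real n - 1) * (\<Sum>i<n. L i) + (\<Sum>i<n. L i + L n)"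
    using Suc by simp
  also have "(\<Sum>i<n. L i + L n) = (\<Sum>i<n. L i) + real n * L n" by (simp add: sum.distrib)
  finally show ?case by (simp add: algebra_simps)
qed

lemma ln_dist_le: "ln (cmod (a - b)) \<le> ln (1 + cmod a) + ln (1 + cmod b)"
proof (cases "a = b")
  case True then show ?thesis by simp
next
  case False
  then have p: "cmod (a - b) > 0" by simp
  have pos: "0 < (1 + cmod a) * (1 + cmod b)" by (intro mult_pos_pos) (auto simp: add_pos_nonneg)
  have "cmod (a - b) \<le> cmod a + cmod b" by (rule norm_triangle_ineq4)
  also have "\<dots> \<le> (1 + cmod a) * (1 + cmod b)" by (simp add: algebra_simps)
  finally have le: "cmod (a - b) \<le> (1 + cmod a) * (1 + cmod b)" .
  from le have "ln (cmod (a - b)) \<le> ln ((1 + cmod a) * (1 + cmod b))" using p pos by (subst ln_le_cancel_iff) auto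
  also have "\<dots> = ln (1 + cmod a) + ln (1 + cmod b)"
    by (rule ln_mult_pos) (auto simp: add_pos_nonneg)
  finally show ?thesis .
qed

lemma pair_sum_upper:
  fixes x :: "nat \<Rightarrow> complex"
  shows "(\<Sum>j<n. \<Sum>i<j. ln (cmod (x i - x j))) \<le> (real n - 1) * (\<Sum>i<n. ln (1 + cmod (x i)))"
proof -
  have "(\<Sum>j<n. \<Sum>i<j. ln (cmod (x i - x j))) \<le> (\<Sum>j<n. \<Sum>i<j. ln (1 + cmod (x i)) + ln (1 + cmod (x j)))"
    by (intro sum_mono ln_dist_le)
  also have "\<dots> = (real n - 1) * (\<Sum>i<n. ln (1 + cmod (x i)))" by (rule double_sum_sym)
  finally show ?thesis .
qed

lemma pair_sum_lower:
  fixes x :: "nat \<Rightarrow> complex" and L :: real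
  assumes n: "n \<ge> 1"
      and nonneg: "\<And>i j. 1 \<le> i \<Longrightarrow> i < j \<Longrightarrow> j < n \<Longrightarrow> 0 \<le> ln (cmod (x i - x j))"
      and first: "\<And>j. 1 \<le> j \<Longrightarrow> j < n \<Longrightarrow> L \<le> ln (cmod (x 0 - x j))"
  shows "(real n - 1) * L \<le> (\<Sum>j<n. \<Sum>i<j. ln (cmod (x i - x j)))"
proof -
  have "(\<Sum>j<n. (if j = 0 then 0 else L)) \<le> (\<Sum>j<n. \<Sum>i<j. ln (cmod (x i - x j)))"
  proof (rule sum_mono)
    fix j assume j: "j \<in> {..<n}"
    show "(if j = 0 then 0 else L) \<le> (\<Sum>i<j. ln (cmod (x i - x j)))"
    proof (cases "j = 0")
      case False
      have "L \<le> ln (cmod (x 0 - x j))" using first[of j] False j by simp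
      also have "\<dots> \<le> (\<Sum>i<j. ln (cmod (x i - x j)))"
        by (rule member_le_sum[where f="\<lambda>i. ln (cmod (x i - x j))"]) (use False j nonneg in auto)
      finally show ?thesis using False by simp
    qed simp
  qed
  moreover have "(\<Sum>j<n. (if j = 0 then 0 else L)) = (real n - 1) * L"
  proof -
    obtain m where m: "n = Suc m" using n by (cases n) auto
    have "(\<Sum>j<Suc m. (if j = 0 then 0 else L)) = real m * L"
      by (induction m) (auto simp: algebra_simps)
    then show ?thesis using m by simp
  qed
  ultimately show ?thesis by simp
qed

lemma nn_int_inverse_infinite:
  assumes c: "c \<ge> 1"
  shows "(\<integral>\<^sup>+s. ennreal (1 / s) * indicator {c..} s \<partial>lborel) = \<infinity>"
proof (rule ccontr)
  assume "(\<integral>\<^sup>+s. ennreal (1 / s) * indicator {c..} s \<partial>lborel) \<noteq> \<infinity>"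
  then obtain r where r: "(\<integral>\<^sup>+s. ennreal (1 / s) * indicator {c..} s \<partial>lborel) = ennreal r" "r \<ge> 0"
    by (cases "\<integral>\<^sup>+s. ennreal (1 / s) * indicator {c..} s \<partial>lborel" rule: ennreal_cases) auto
  define b where "b = c * exp (r + 1)"
  have "1 \<le> exp (r + 1)" using r(2) by simp
  then have cb: "c \<le> b" using c unfolding b_def
    by (metis mult.right_neutral mult_left_mono order_trans zero_le_one)
  have hi: "((\<lambda>s. 1 / s) has_integral (ln b - ln c)) {c..b}"
  proof (rule fundamental_theorem_of_calculus)
    show "c \<le> b" by fact
    fix s assume s: "s \<in> {c..b}"
    then have "s > 0" using c by simp
    then have "(ln has_real_derivative (1 / s)) (at s within {c..b})"
      by (auto intro!: derivative_eq_intros)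
    then show "(ln has_vector_derivative (1 / s)) (at s within {c..b})"
      by (simp add: has_real_derivative_iff_has_vector_derivative)
  qed
  have "ennreal (ln b - ln c) = (\<integral>\<^sup>+s. ennreal (indicator {c..b} s * (1 / s)) \<partial>lborel)"
    by (rule nn_integral_has_integral_lebesgue[OF _ hi, symmetric]) (use c in auto)
  also have "\<dots> \<le> (\<integral>\<^sup>+s. ennreal (1 / s) * indicator {c..} s \<partial>lborel)"
    by (intro nn_integral_mono) (auto simp: indicator_def)
  also have "\<dots> = ennreal r" by (rule r)
  finally have "ln b - ln c \<le> r" using r(2) by (simp add: ennreal_le_iff)
  moreover have "ln b - ln c = r + 1"
  proof -
    have "ln b = ln c + ln (exp (r + 1))" unfolding b_def using c by (intro ln_mult_pos) auto
    then show ?thesis by simp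
  qed
  ultimately show False by simp
qed

lemma nV_formula:
  assumes "n \<noteq> 0" "R > 0"
  shows "real n * ext_pot n \<alpha> R z = (if cmod z \<le> R then (\<alpha> / 2) * ((cmod z)\<^sup>2 / R\<^sup>2 - 1 + 2 * ln R) else \<alpha> * ln (cmod z))"
  using assms by (simp add: ext_pot_formula[OF assms(2)] indicator_def field_simps)

lemma ext_pot_meas[measurable]:
  assumes "R > 0"
  shows "ext_pot n \<alpha> R \<in> borel_measurable borel"
proof -
  have "ext_pot n \<alpha> R = (\<lambda>x. (\<alpha> / (2 * real n)) * ((cmod x)\<^sup>2 / R\<^sup>2 - 1 + 2 * ln R) * indicator {x. cmod x \<le> R} x
        + (\<alpha> / real n) * ln (cmod x) * indicator {x. cmod x > R} x)"
    by (rule ext) (rule ext_pot_formula[OF assms])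
  moreover have "(\<lambda>x. (\<alpha> / (2 * real n)) * ((cmod x)\<^sup>2 / R\<^sup>2 - 1 + 2 * ln R) * indicator {x. cmod x \<le> R} x
        + (\<alpha> / real n) * ln (cmod x) * indicator {x::complex. cmod x > R} x) \<in> borel_measurable borel"
    by measurable
  ultimately show ?thesis by simp
qed

lemma nV_upper_small:
  assumes "n \<noteq> 0" "R > 0" "\<alpha> > 0" "cmod z \<le> B" "B \<ge> 1"
  shows "real n * ext_pot n \<alpha> R z \<le> \<alpha> * \<bar>ln R\<bar> + \<alpha> * ln B"
proof -
  have lB: "0 \<le> \<alpha> * ln B" using assms by simp
  show ?thesis
  proof (cases "cmod z \<le> R")
    case True
    have "(cmod z)\<^sup>2 / R\<^sup>2 \<le> 1" using True assms by (simp add: divide_le_eq_1 power_mono)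
    then have "(\<alpha> / 2) * ((cmod z)\<^sup>2 / R\<^sup>2 - 1 + 2 * ln R) \<le> (\<alpha> / 2) * (2 * ln R)"
      using assms by (intro mult_left_mono) auto
    also have "\<dots> \<le> \<alpha> * \<bar>ln R\<bar>" using assms by simp
    finally show ?thesis using True lB nV_formula[OF assms(1,2)] by simp
  next
    case False
    then have zp: "0 < cmod z" using assms by linarith
    then have "ln (cmod z) \<le> ln B" using assms by (subst ln_le_cancel_iff) auto
    then have "\<alpha> * ln (cmod z) \<le> \<alpha> * ln B" using assms by simp
    moreover have "0 \<le> \<alpha> * \<bar>ln R\<bar>" using assms by simp
    ultimately show ?thesis using False nV_formula[OF assms(1,2)] by simp
  qed
qed

lemma nV_lower_small:
  assumes "n \<noteq> 0" "R > 0" "\<alpha> > 0" "cmod z \<le> R"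
  shows "- (\<alpha> / 2) - \<alpha> * \<bar>ln R\<bar> \<le> real n * ext_pot n \<alpha> R z"
proof -
  have "(\<alpha> / 2) * (0 - 1 + 2 * (- \<bar>ln R\<bar>)) \<le> (\<alpha> / 2) * ((cmod z)\<^sup>2 / R\<^sup>2 - 1 + 2 * ln R)"
  proof (rule mult_left_mono)
    have "0 \<le> (cmod z)\<^sup>2 / R\<^sup>2" by simp
    moreover have "- \<bar>ln R\<bar> \<le> ln R" by simp
    ultimately show "0 - 1 + 2 * (- \<bar>ln R\<bar>) \<le> (cmod z)\<^sup>2 / R\<^sup>2 - 1 + 2 * ln R" by linarith
  qed (use assms in simp)
  then show ?thesis using nV_formula[OF assms(1,2)] assms(4) by (simp add: algebra_simps)
qed

lemma powr_tail_finite: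
  assumes R: "R > 0" and p: "p > 2"
  shows "(\<integral>\<^sup>+z. ennreal (cmod z powr (- p)) * indicator {z. R < cmod z} z \<partial>(lborel :: complex measure)) < \<infinity>"
proof -
  have hi: "((\<lambda>s. s powr (1 - p)) has_integral - (R powr (1 - p + 1)) / (1 - p + 1)) {R..}"
    by (rule has_integral_powr_to_inf) (use p R in auto)
  have "(\<integral>\<^sup>+z. ennreal (cmod z powr (- p)) * indicator {z. R < cmod z} z \<partial>(lborel :: complex measure))
      = (\<integral>\<^sup>+z. (\<lambda>s. ennreal (s powr (- p)) * indicator {R<..} s) (cmod z) \<partial>lborel)"
    by (simp add: indicator_def)
  also have "\<dots> = (\<integral>\<^sup>+s. ennreal (2 * pi * max 0 s) * (ennreal (s powr (- p)) * indicator {R<..} s) \<partial>lborel)"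
    by (rule radial_nn) measurable
  also have "\<dots> \<le> (\<integral>\<^sup>+s. ennreal (2 * pi) * ennreal (indicator {R..} s * s powr (1 - p)) \<partial>lborel)"
  proof (rule nn_integral_mono)
    fix s :: real
    show "ennreal (2 * pi * max 0 s) * (ennreal (s powr (- p)) * indicator {R<..} s) \<le> ennreal (2 * pi) * ennreal (indicator {R..} s * s powr (1 - p))"
    proof (cases "R < s")
      case True
      then have sp: "s > 0" using R by simp
      have "s powr (1 - p) = s * s powr (- p)"
        using sp by (simp add: powr_diff powr_minus divide_inverse)
      then have "ennreal (2 * pi * max 0 s) * (ennreal (s powr (- p)) * indicator {R<..} s) = ennreal (2 * pi) * ennreal (indicator {R..} s * s powr (1 - p))"
        using True sp by (simp add: ennreal_mult[symmetric] max_def indicator_def mult.assoc)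
      then show ?thesis by simp
    qed (auto simp: indicator_def)
  qed
  also have "\<dots> = ennreal (2 * pi) * (\<integral>\<^sup>+s. ennreal (indicator {R..} s * s powr (1 - p)) \<partial>lborel)"
    by (rule nn_integral_cmult) measurable
  also have "(\<integral>\<^sup>+s. ennreal (indicator {R..} s * s powr (1 - p)) \<partial>lborel) = ennreal (- (R powr (1 - p + 1)) / (1 - p + 1))"
    by (rule nn_integral_has_integral_lebesgue[OF _ hi]) auto
  also have "ennreal (2 * pi) * ennreal (- (R powr (1 - p + 1)) / (1 - p + 1)) < \<infinity>"
    by (simp add: ennreal_mult_less_top)
  finally show ?thesis .
qed

lemma powr_tail_infinite:
  assumes M: "M \<ge> 1" and p: "p \<le> 2" and K: "K > 0"
  shows "(\<integral>\<^sup>+z. ennreal (K * cmod z powr (- p)) * indicator {z. M \<le> cmod z} z \<partial>(lborel :: complex measure)) = \<infinity>"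
proof -
  have "(\<integral>\<^sup>+z. ennreal (K * cmod z powr (- p)) * indicator {z. M \<le> cmod z} z \<partial>(lborel :: complex measure))
      = (\<integral>\<^sup>+z. (\<lambda>s. ennreal (K * s powr (- p)) * indicator {M..} s) (cmod z) \<partial>lborel)"
    by (simp add: indicator_def)
  also have "\<dots> = (\<integral>\<^sup>+s. ennreal (2 * pi * max 0 s) * (ennreal (K * s powr (- p)) * indicator {M..} s) \<partial>lborel)"
    by (rule radial_nn) measurable
  also have "\<dots> \<ge> (\<integral>\<^sup>+s. ennreal (2 * pi * K) * (ennreal (1 / s) * indicator {M..} s) \<partial>lborel)"
  proof (rule nn_integral_mono)
    fix s :: real
    show "ennreal (2 * pi * K) * (ennreal (1 / s) * indicator {M..} s) \<le> ennreal (2 * pi * max 0 s) * (ennreal (K * s powr (- p)) * indicator {M..} s)"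
    proof (cases "M \<le> s")
      case True
      then have s1: "s \<ge> 1" using M by simp
      have "s powr (-1) \<le> s powr (1 - p)" using s1 p by (intro powr_mono) auto
      then have "1 / s \<le> s * s powr (- p)"
        using s1 by (simp add: powr_diff powr_minus divide_inverse powr_minus_divide)
      then have "2 * pi * K * (1 / s) \<le> 2 * pi * K * (s * s powr (- p))"
        using K by (intro mult_left_mono) auto
      then have "2 * pi * K * (1 / s) \<le> 2 * pi * s * (K * s powr (- p))"
        by (simp add: mult_ac)
      then have "ennreal (2 * pi * K * (1 / s)) \<le> ennreal (2 * pi * s * (K * s powr (- p)))"
        by (rule ennreal_leI)
      then show ?thesis using True s1 K
        by (simp add: ennreal_mult[symmetric] max_def indicator_def mult.assoc)
    qed (auto simp: indicator_def)
  qed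
  also have "(\<integral>\<^sup>+s. ennreal (2 * pi * K) * (ennreal (1 / s) * indicator {M..} s) \<partial>lborel)
      = ennreal (2 * pi * K) * (\<integral>\<^sup>+s. ennreal (1 / s) * indicator {M..} s \<partial>lborel)"
    by (rule nn_integral_cmult) measurable
  also have "\<dots> = \<infinity>" using nn_int_inverse_infinite[OF M] K by simp
  finally show ?thesis by (simp add: top_unique)
qed

lemma g_finite:
  assumes n: "n \<ge> 2" and \<alpha>: "\<alpha> > 0" and \<beta>: "\<beta> > 0" and R: "R > 0"
      and p: "\<beta> * (\<alpha> - real n + 1) > 2"
  shows "(\<integral>\<^sup>+z. ennreal (exp (\<beta> * (real n - 1) * ln (1 + cmod z) - \<beta> * (real n * ext_pot n \<alpha> R z))) \<partial>lborel) < \<infinity>"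
proof -
  define q where "q = \<beta> * (\<alpha> - real n + 1)"
  have n0: "n \<noteq> 0" using n by simp
  have n1: "real n - 1 \<ge> 0" using n by simp
  define c1 where "c1 = \<beta> * (real n - 1) * ln (1 + R) + \<beta> * (\<alpha> / 2 + \<alpha> * \<bar>ln R\<bar>)"
  define c2 where "c2 = \<beta> * (real n - 1) * ln (1 + 1 / R)"
  have pw: "ennreal (exp (\<beta> * (real n - 1) * ln (1 + cmod z) - \<beta> * (real n * ext_pot n \<alpha> R z)))
      \<le> ennreal (exp c1) * indicator (cball 0 R) z + ennreal (exp c2) * (ennreal (cmod z powr (- q)) * indicator {z. R < cmod z} z)" for z
  proof (cases "cmod z \<le> R")
    case True
    have "ln (1 + cmod z) \<le> ln (1 + R)" using True R
      by (subst ln_le_cancel_iff) (auto simp: add_pos_nonneg)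
    then have a: "\<beta> * (real n - 1) * ln (1 + cmod z) \<le> \<beta> * (real n - 1) * ln (1 + R)"
      using \<beta> n1 by (intro mult_left_mono) auto
    have b: "- (\<alpha> / 2) - \<alpha> * \<bar>ln R\<bar> \<le> real n * ext_pot n \<alpha> R z"
      by (rule nV_lower_small[OF n0 R \<alpha> True])
    have "\<beta> * (real n - 1) * ln (1 + cmod z) - \<beta> * (real n * ext_pot n \<alpha> R z) \<le> c1"
      using a mult_left_mono[OF b, of \<beta>] \<beta> unfolding c1_def by (simp add: algebra_simps)
    then have "ennreal (exp (\<beta> * (real n - 1) * ln (1 + cmod z) - \<beta> * (real n * ext_pot n \<alpha> R z))) \<le> ennreal (exp c1)"
      by (intro ennreal_leI) simp
    then show ?thesis using True by (simp add: indicator_def)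
  next
    case False
    then have zR: "R < cmod z" by simp
    then have zp: "0 < cmod z" using R by linarith
    have nv: "real n * ext_pot n \<alpha> R z = \<alpha> * ln (cmod z)" using nV_formula[OF n0 R] False by simp
    have "1 + cmod z \<le> (1 + 1 / R) * cmod z" using zR R by (simp add: field_simps)
    then have "ln (1 + cmod z) \<le> ln ((1 + 1 / R) * cmod z)" using zp R
      by (subst ln_le_cancel_iff) (auto simp: add_pos_nonneg)
    also have "\<dots> = ln (1 + 1 / R) + ln (cmod z)" using zp R by (intro ln_mult_pos) (auto simp: add_pos_nonneg)
    finally have l: "ln (1 + cmod z) \<le> ln (1 + 1 / R) + ln (cmod z)" .
    have "\<beta> * (real n - 1) * ln (1 + cmod z) \<le> \<beta> * (real n - 1) * (ln (1 + 1 / R) + ln (cmod z))"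
      using \<beta> n1 l by (intro mult_left_mono) auto
    then have e: "\<beta> * (real n - 1) * ln (1 + cmod z) - \<beta> * (real n * ext_pot n \<alpha> R z) \<le> c2 + (- q) * ln (cmod z)"
      unfolding nv c2_def q_def by (simp add: algebra_simps)
    have "exp (\<beta> * (real n - 1) * ln (1 + cmod z) - \<beta> * (real n * ext_pot n \<alpha> R z)) \<le> exp (c2 + (- q) * ln (cmod z))"
      using e by simp
    also have "\<dots> = exp c2 * exp ((- q) * ln (cmod z))" by (rule exp_add)
    also have "\<dots> = exp c2 * cmod z powr (- q)" using zp by (simp add: powr_def)
    finally have "ennreal (exp (\<beta> * (real n - 1) * ln (1 + cmod z) - \<beta> * (real n * ext_pot n \<alpha> R z))) \<le> ennreal (exp c2 * cmod z powr (- q))"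
      by (rule ennreal_leI)
    then show ?thesis using zR by (simp add: indicator_def ennreal_mult)
  qed
  have "(\<integral>\<^sup>+z. ennreal (exp (\<beta> * (real n - 1) * ln (1 + cmod z) - \<beta> * (real n * ext_pot n \<alpha> R z))) \<partial>lborel)
     \<le> (\<integral>\<^sup>+z. ennreal (exp c1) * indicator (cball 0 R) z + ennreal (exp c2) * (ennreal (cmod z powr (- q)) * indicator {z. R < cmod z} z) \<partial>lborel)"
    by (intro nn_integral_mono pw)
  also have "\<dots> = (\<integral>\<^sup>+z. ennreal (exp c1) * indicator (cball (0::complex) R) z \<partial>lborel) + (\<integral>\<^sup>+z. ennreal (exp c2) * (ennreal (cmod z powr (- q)) * indicator {z. R < cmod z} z) \<partial>lborel)"
    by (rule nn_integral_add[of "\<lambda>z. ennreal (exp c1) * indicator (cball 0 R) z" lborel "\<lambda>z. ennreal (exp c2) * (ennreal (cmod z powr (- q)) * indicator {z. R < cmod z} z)"]) measurable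
  also have "(\<integral>\<^sup>+z. ennreal (exp c1) * indicator (cball (0::complex) R) z \<partial>lborel) = ennreal (exp c1) * emeasure lborel (cball (0::complex) R)"
    by (rule nn_integral_cmult_indicator) simp
  also have "(\<integral>\<^sup>+z. ennreal (exp c2) * (ennreal (cmod z powr (- q)) * indicator {z. R < cmod z} z) \<partial>lborel)
      = ennreal (exp c2) * (\<integral>\<^sup>+z. ennreal (cmod z powr (- q)) * indicator {z. R < cmod z} z \<partial>(lborel :: complex measure))"
    by (rule nn_integral_cmult) measurable
  also have "ennreal (exp c1) * emeasure lborel (cball (0::complex) R) + ennreal (exp c2) * (\<integral>\<^sup>+z. ennreal (cmod z powr (- q)) * indicator {z. R < cmod z} z \<partial>(lborel :: complex measure)) < \<infinity>"
    using powr_tail_finite[OF R, of q] p R unfolding q_def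
    by (simp add: emeasure_D ennreal_mult_less_top)
  finally show ?thesis .
qed

lemma neg_beta_energy:
  "- \<beta> * energy n \<alpha> R x = \<beta> * (\<Sum>j<n. \<Sum>i<j. ln (cmod (x i - x j))) - \<beta> * (\<Sum>i<n. real n * ext_pot n \<alpha> R (x i))"
  unfolding energy_def by (simp add: sum_negf sum_distrib_left algebra_simps)

lemma Z_finite:
  assumes n: "n \<ge> 2" and \<alpha>: "\<alpha> > 0" and \<beta>: "\<beta> > 0" and R: "R > 0"
      and p: "\<beta> * (\<alpha> - real n + 1) > 2"
  shows "partition_fn n \<beta> \<alpha> R < \<infinity>"
proof -
  interpret product_sigma_finite "\<lambda>_::nat. lborel :: complex measure" by standard
  define g where "g = (\<lambda>z. ennreal (exp (\<beta> * (real n - 1) * ln (1 + cmod z) - \<beta> * (real n * ext_pot n \<alpha> R z))))"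
  have gm[measurable]: "g \<in> borel_measurable lborel" unfolding g_def using R by measurable
  have pw: "ennreal (exp (- \<beta> * energy n \<alpha> R x)) \<le> (\<Prod>i\<in>{..<n}. g (x i))" for x
  proof -
    have "\<beta> * (\<Sum>j<n. \<Sum>i<j. ln (cmod (x i - x j))) \<le> \<beta> * ((real n - 1) * (\<Sum>i<n. ln (1 + cmod (x i))))"
      using \<beta> by (intro mult_left_mono pair_sum_upper) auto
    moreover have "(\<Sum>i<n. \<beta> * (real n - 1) * ln (1 + cmod (x i)) - \<beta> * (real n * ext_pot n \<alpha> R (x i)))
        = \<beta> * ((real n - 1) * (\<Sum>i<n. ln (1 + cmod (x i)))) - \<beta> * (\<Sum>i<n. real n * ext_pot n \<alpha> R (x i))"
      by (simp add: sum_subtractf sum_distrib_left mult.assoc)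
    ultimately have "- \<beta> * energy n \<alpha> R x \<le> (\<Sum>i<n. \<beta> * (real n - 1) * ln (1 + cmod (x i)) - \<beta> * (real n * ext_pot n \<alpha> R (x i)))"
      unfolding neg_beta_energy by linarith
    then have "exp (- \<beta> * energy n \<alpha> R x) \<le> exp (\<Sum>i<n. \<beta> * (real n - 1) * ln (1 + cmod (x i)) - \<beta> * (real n * ext_pot n \<alpha> R (x i)))"
      by simp
    also have "\<dots> = (\<Prod>i<n. exp (\<beta> * (real n - 1) * ln (1 + cmod (x i)) - \<beta> * (real n * ext_pot n \<alpha> R (x i))))"
      by (rule exp_sum) simp
    finally have "ennreal (exp (- \<beta> * energy n \<alpha> R x)) \<le> ennreal (\<Prod>i<n. exp (\<beta> * (real n - 1) * ln (1 + cmod (x i)) - \<beta> * (real n * ext_pot n \<alpha> R (x i))))"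
      by (rule ennreal_leI)
    also have "\<dots> = (\<Prod>i\<in>{..<n}. g (x i))" unfolding g_def by (rule prod_ennreal[symmetric]) simp
    finally show ?thesis .
  qed
  have "partition_fn n \<beta> \<alpha> R \<le> (\<integral>\<^sup>+x. (\<Prod>i\<in>{..<n}. g (x i)) \<partial>PiM {..<n} (\<lambda>_. lborel))"
    unfolding partition_fn_def by (intro nn_integral_mono pw)
  also have "\<dots> = (\<Prod>i\<in>{..<n}. integral\<^sup>N lborel g)"
    by (rule product_nn_integral_prod) auto
  also have "\<dots> = (integral\<^sup>N lborel g) ^ n" by simp
  also have "\<dots> < \<infinity>"
    using g_finite[OF n \<alpha> \<beta> R p] unfolding g_def by (simp add: power_less_top_ennreal)
  finally show ?thesis .
qed

lemma Z_infinite: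
  assumes n: "n \<ge> 2" and \<alpha>: "\<alpha> > 0" and \<beta>: "\<beta> > 0" and R: "R > 0"
      and p: "\<beta> * (\<alpha> - real n + 1) \<le> 2"
  shows "partition_fn n \<beta> \<alpha> R = \<infinity>"
proof -
  interpret product_sigma_finite "\<lambda>_::nat. lborel :: complex measure" by standard
  have n0: "n \<noteq> 0" using n by simp
  define q where "q = \<beta> * (\<alpha> - real n + 1)"
  define M where "M = 4 * real n + R + 1"
  define K0 where "K0 = \<alpha> * \<bar>ln R\<bar> + \<alpha> * ln (2 * real n)"
  define K where "K = exp (- \<beta> * (real n - 1) * (ln 2 + K0))"
  define c where "c = (\<lambda>i::nat. complex_of_real (2 * real i))"
  define G where "G = (\<lambda>i z. if i = 0 then ennreal (K * cmod z powr (- q)) * indicator {z. M \<le> cmod z} z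
                              else indicator (ball (c i) (1/2)) z :: ennreal)"
  have Gm[measurable]: "G i \<in> borel_measurable lborel" for i
    unfolding G_def by (cases "i = 0") (auto intro!: borel_measurable_indicator simp: borel_open)
  have Kp: "K > 0" by (simp add: K_def)
  have M1: "M \<ge> 1" using R by (simp add: M_def)
  have U: "{..<n} = insert 0 {1..<n}" using n by auto
  have pw: "(\<Prod>i\<in>{..<n}. G i (x i)) \<le> ennreal (exp (- \<beta> * energy n \<alpha> R x))" for x
  proof (cases "M \<le> cmod (x 0) \<and> (\<forall>i\<in>{1..<n}. x i \<in> ball (c i) (1/2))")
    case False
    then have "\<exists>i\<in>{..<n}. G i (x i) = 0"
    proof (cases "M \<le> cmod (x 0)")
      case True
      with False obtain i where "i \<in> {1..<n}" "x i \<notin> ball (c i) (1/2)" by auto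
      then show ?thesis by (intro bexI[of _ i]) (auto simp: G_def)
    next
      case False
      then show ?thesis using n by (intro bexI[of _ 0]) (auto simp: G_def)
    qed
    then have z: "(\<Prod>i\<in>{..<n}. G i (x i)) = 0" by (intro prod_zero) auto
    show ?thesis by (simp only: z) simp
  next
    case True
    then have x0: "M \<le> cmod (x 0)" and xb: "\<And>i. i \<in> {1..<n} \<Longrightarrow> cmod (c i - x i) < 1/2"
      by (auto simp: dist_norm)
    have x0p: "0 < cmod (x 0)" using x0 M1 by linarith
    have xi: "cmod (x i) \<le> 2 * real n" if "i \<in> {1..<n}" for i
    proof -
      have "cmod (x i) \<le> cmod (c i) + cmod (c i - x i)" using norm_triangle_ineq4[of "c i" "c i - x i"] by simp
      also have "\<dots> \<le> 2 * real i + 1/2" using xb[OF that] by (simp add: c_def)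
      also have "\<dots> \<le> 2 * real n" using that by simp
      finally show ?thesis .
    qed
    have nonneg: "0 \<le> ln (cmod (x i - x j))" if "1 \<le> i" "i < j" "j < n" for i j
    proof -
      have "c i - c j = (c i - x i) + (x i - x j) - (c j - x j)" by simp
      then have "cmod (c i - c j) \<le> cmod (c i - x i) + cmod (x i - x j) + cmod (c j - x j)"
        by (metis norm_triangle_ineq4 norm_triangle_ineq order_trans add_right_mono)
      moreover have "cmod (c i - c j) = 2 * (real j - real i)"
      proof -
        have "c i - c j = complex_of_real (2 * real i - 2 * real j)" by (simp add: c_def)
        then have "cmod (c i - c j) = \<bar>2 * real i - 2 * real j\<bar>" by (simp only: norm_of_real)
        then show ?thesis using that by simp
      qed
      moreover have "cmod (c i - x i) < 1/2" "cmod (c j - x j) < 1/2" using xb that by auto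
      ultimately have "cmod (x i - x j) \<ge> 1" using that by simp
      then show ?thesis by simp
    qed
    have first: "ln (cmod (x 0)) - ln 2 \<le> ln (cmod (x 0 - x j))" if "1 \<le> j" "j < n" for j
    proof -
      have "cmod (x 0) - cmod (x j) \<le> cmod (x 0 - x j)" by (rule norm_triangle_ineq2)
      moreover have "cmod (x j) \<le> 2 * real n" using xi that by simp
      moreover have "4 * real n \<le> cmod (x 0)" using x0 R by (simp add: M_def)
      ultimately have d: "cmod (x 0) / 2 \<le> cmod (x 0 - x j)" by simp
      have "ln (cmod (x 0)) - ln 2 = ln (cmod (x 0) / 2)" using x0p by (simp add: ln_div)
      also have "\<dots> \<le> ln (cmod (x 0 - x j))" using d x0p by (subst ln_le_cancel_iff) auto
      finally show ?thesis .
    qed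
    have Lb: "(real n - 1) * (ln (cmod (x 0)) - ln 2) \<le> (\<Sum>j<n. \<Sum>i<j. ln (cmod (x i - x j)))"
      by (rule pair_sum_lower) (use n nonneg first in auto)
    have v0: "real n * ext_pot n \<alpha> R (x 0) = \<alpha> * ln (cmod (x 0))"
      using nV_formula[OF n0 R] x0 R by (simp add: M_def)
    have vi: "real n * ext_pot n \<alpha> R (x i) \<le> K0" if "i \<in> {1..<n}" for i
      unfolding K0_def by (rule nV_upper_small[OF n0 R \<alpha> xi[OF that]]) (use n in simp)
    have "(\<Sum>i<n. real n * ext_pot n \<alpha> R (x i)) = real n * ext_pot n \<alpha> R (x 0) + (\<Sum>i\<in>{1..<n}. real n * ext_pot n \<alpha> R (x i))"
      unfolding U by simp
    also have "(\<Sum>i\<in>{1..<n}. real n * ext_pot n \<alpha> R (x i)) \<le> (\<Sum>i\<in>{1..<n}. K0)"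
      by (rule sum_mono) (rule vi)
    also have "(\<Sum>i\<in>{1..<n}. K0) = (real n - 1) * K0" using n by (simp add: of_nat_diff)
    finally have Vb: "(\<Sum>i<n. real n * ext_pot n \<alpha> R (x i)) \<le> \<alpha> * ln (cmod (x 0)) + (real n - 1) * K0"
      unfolding v0 by simp
    have "- \<beta> * (real n - 1) * (ln 2 + K0) + (- q) * ln (cmod (x 0))
        = \<beta> * ((real n - 1) * (ln (cmod (x 0)) - ln 2)) - \<beta> * (\<alpha> * ln (cmod (x 0)) + (real n - 1) * K0)"
      unfolding q_def by (simp add: algebra_simps)
    also have "\<dots> \<le> - \<beta> * energy n \<alpha> R x"
      unfolding neg_beta_energy using mult_left_mono[OF Lb, of \<beta>] mult_left_mono[OF Vb, of \<beta>] \<beta>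
      by linarith
    finally have ex: "- \<beta> * (real n - 1) * (ln 2 + K0) + (- q) * ln (cmod (x 0)) \<le> - \<beta> * energy n \<alpha> R x" .
    have "K * cmod (x 0) powr (- q) = exp (- \<beta> * (real n - 1) * (ln 2 + K0) + (- q) * ln (cmod (x 0)))"
      using x0p by (simp add: K_def powr_def exp_add[symmetric])
    also have "\<dots> \<le> exp (- \<beta> * energy n \<alpha> R x)" using ex by simp
    finally have real_le: "K * cmod (x 0) powr (- q) \<le> exp (- \<beta> * energy n \<alpha> R x)" .
    have "(\<Prod>i\<in>{..<n}. G i (x i)) = G 0 (x 0) * (\<Prod>i\<in>{1..<n}. G i (x i))"
      unfolding U by simp
    also have "(\<Prod>i\<in>{1..<n}. G i (x i)) = 1"
      using True by (intro prod.neutral) (auto simp: G_def)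
    also have "G 0 (x 0) = ennreal (K * cmod (x 0) powr (- q))" using x0 by (simp add: G_def)
    finally show ?thesis using real_le by (simp add: ennreal_leI)
  qed
  have "(\<integral>\<^sup>+x. (\<Prod>i\<in>{..<n}. G i (x i)) \<partial>PiM {..<n} (\<lambda>_. lborel)) \<le> partition_fn n \<beta> \<alpha> R"
    unfolding partition_fn_def by (intro nn_integral_mono pw)
  moreover have "(\<integral>\<^sup>+x. (\<Prod>i\<in>{..<n}. G i (x i)) \<partial>PiM {..<n} (\<lambda>_. lborel)) = (\<Prod>i\<in>{..<n}. integral\<^sup>N lborel (G i))"
    by (rule product_nn_integral_prod) auto
  moreover have "(\<Prod>i\<in>{..<n}. integral\<^sup>N lborel (G i)) = \<infinity>"
  proof -
    have G0: "integral\<^sup>N lborel (G 0) = \<infinity>"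
      unfolding G_def using powr_tail_infinite[OF M1 _ Kp, of q] p by (simp add: q_def)
    have Gi: "integral\<^sup>N lborel (G i) = ennreal (pi / 4)" if "i \<in> {1..<n}" for i
    proof -
      have "integral\<^sup>N lborel (G i) = emeasure lborel (ball (c i) (1/2))"
        using that by (simp add: G_def)
      also have "\<dots> = ennreal (pi * (1/2)^2)" by (rule emeasure_ball_complex) simp
      finally show ?thesis by (simp add: power2_eq_square)
    qed
    have "(\<Prod>i\<in>{1..<n}. integral\<^sup>N lborel (G i)) = (\<Prod>i\<in>{1..<n}. ennreal (pi / 4))"
      by (rule prod.cong) (auto simp: Gi)
    also have "\<dots> = ennreal ((pi / 4) ^ (n - 1))" by (simp add: ennreal_power)
    finally have nz: "(\<Prod>i\<in>{1..<n}. integral\<^sup>N lborel (G i)) \<noteq> 0" by simp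
    show ?thesis unfolding U using G0 nz by simp
  qed
  ultimately show ?thesis by (simp add: top_unique)
qed

theorem lemma1p1:
  fixes n :: nat and \<alpha> \<beta> R :: real
  assumes "n \<ge> 2" and "\<alpha> > 0" and "\<beta> > 0" and "R > 0"
  shows "(partition_fn n \<beta> \<alpha> R < \<infinity> \<longleftrightarrow> \<alpha> - real n > 2 / \<beta> - 1)
    \<and> (\<forall>x. ext_pot n \<alpha> R x =
          (\<alpha> / (2 * real n)) * ((cmod x)\<^sup>2 / R\<^sup>2 - 1 + 2 * ln R) * indicator {x. cmod x \<le> R} x
        + (\<alpha> / real n) * ln (cmod x) * indicator {x. cmod x > R} x)"
proof
  have eqv: "\<alpha> - real n > 2 / \<beta> - 1 \<longleftrightarrow> \<beta> * (\<alpha> - real n + 1) > 2"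
  proof -
    have "\<alpha> - real n > 2 / \<beta> - 1 \<longleftrightarrow> 2 / \<beta> < \<alpha> - real n + 1" by linarith
    also have "\<dots> \<longleftrightarrow> 2 < (\<alpha> - real n + 1) * \<beta>" using assms(3) by (simp add: divide_less_eq)
    finally show ?thesis by (simp add: mult.commute)
  qed
  show "partition_fn n \<beta> \<alpha> R < \<infinity> \<longleftrightarrow> \<alpha> - real n > 2 / \<beta> - 1"
  proof (cases "\<beta> * (\<alpha> - real n + 1) > 2")
    case True
    then show ?thesis using Z_finite[OF assms True] eqv by simp
  next
    case False
    then have le2: "\<beta> * (\<alpha> - real n + 1) \<le> 2" by simp
    show ?thesis using Z_infinite[OF assms le2] eqv False by simp
  qed
  show "\<forall>x. ext_pot n \<alpha> R x =
          (\<alpha> / (2 * real n)) * ((cmod x)\<^sup>2 / R\<^sup>2 - 1 + 2 * ln R) * indicator {x. cmod x \<le> R} x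
        + (\<alpha> / real n) * ln (cmod x) * indicator {x. cmod x > R} x"
    using ext_pot_formula[OF assms(4)] by blast
qed

end
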